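(* Let $\Sigma$ be the discrete-time LTI system $x_{k+1}=Ax_k+Bu_k$, $y_k=Cx_k+Du_k$ with real matrices of dimensions $n_x\times n_x$, $n_x\times n_u$, $n_y\times n_x$, $n_y\times n_u$ and $(A,B)$ controllable. Let $Q,M\in\mathbb{N}_{\geqslant 1}$, $\bm{\omega}=(\omega_0,\dots,\omega_{M-1})$ with $\omega_m\in[0,\pi)$, and let $\{U^{d,i}(\omega),Y^{d,i}(\omega)\}$, $i\in\{1,\dots,Q\}$, be input-output spectra of $\Sigma$ with sampled sequences $\bm{U}^{d,i}$, $\bm{Y}^{d,i}$ at the frequencies $\bm{\omega}$. Let $L_0,L\in\mathbb{N}$ with $n_x\leqslant L_0\leqslant L$, and suppose $\bm{U}^{d,i}$, $i\in\{1,\dots,Q\}$, are CPE of order $L+n_x$. Let $\{\bm{u}^{\mathrm{ini}},\bm{y}^{\mathrm{ini}}\}$ be a real input-output trajectory of $\Sigma$ of length $L_0$. Suppose $\{\bm{u},\bm{y}\}$ is a real input-output trajectory of $\Sigma$ of length $L$ with $(u_k,y_k)=(u^{\mathrm{ini}}_k,y^{\mathrm{ini}}_k)$ for $k=0,\dots,L_0-1$. Then there exists $g\in\mathbb{R}^{2MQ}$ such that $$\begin{bmatrix}u^{\mathrm{ini}}_{[0,L_0-1]}\\ u_{[L_0,L-1]}\\ y^{\mathrm{ini}}_{[0,L_0-1]}\end{bmatrix}=\begin{bmatrix}\Gamma_L(\{\bm{U}^{d,i}\}_{i=1}^Q,\bm{\omega})\\ \Gamma_{L_0}(\{\bm{Y}^{d,i}\}_{i=1}^Q,\bm{\omega})\end{bmatrix}g,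 \qquad (\ast)$$ and moreover, for any $g\in\mathbb{R}^{2MQ}$ satisfying $(\ast)$, the output satisfies $y_{[0,L-1]}=\Gamma_L(\{\bm{Y}^{d,i}\}_{i=1}^Q,\bm{\omega})g$.
   Context: $j=\sqrt{-1}$; $^*$ denotes entrywise complex conjugation; $\otimes$ is the Kronecker product; $\mathbb{W}=[-\pi,\pi)$. For a sequence $\bm{x}$, $x_{[n,m]}=(x_n,\dots,x_m)$ is the vertical stack of its entries. Input-output trajectory: real sequences $\{\bm{u},\bm{y}\}$ of length $N$ form an input-output trajectory of $\Sigma$ if there is a real state sequence $\bm{x}$ of length $N$ with $x_{k+1}=Ax_k+Bu_k$ for $k=0,\dots,N-2$ and $y_k=Cx_k+Du_k$ for $k=0,\dots,N-1$. Spectra: a spectrum is a function $V:\mathbb{W}\to\mathbb{C}^{n}$ with $V(\omega)=V^*(-\omega)$ for all $\omega$. A pair $\{U(\omega),Y(\omega)\}$ of such spectra (values in $\mathbb{C}^{n_u},\mathbb{C}^{n_y}$) is an input-output spectrum of $\Sigma$ if there exists a spectrum $X(\omega)\in\mathbb{C}^{n_x}$ with $e^{j\omega}X(\omega)=AX(\omega)+BU(\omega)$ and $Y(\omega)=CX(\omega)+DU(\omega)$ for all $\omega\in\mathbb{W}$. Sampled sequences: $\bm{U}^{d,i}=(U^{d,i}(\omega_0),\dots,U^{d,i}(\omega_{M-1}))$ and likewise for $\bm{Y}^{d,i}$. $W_L(\omega)=\begin{bmatrix}1 & e^{j\omega} & \cdots & e^{j\omega(L-1)}\end{bmatrix}^\top$.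 For $\bm{V}=(V_0,\dots,V_{M-1})$, $V_m\in\mathbb{C}^{n_v}$: $F_L(\bm{V},\bm{\omega})=\begin{bmatrix}W_L(\omega_0)\otimes V_0 & \cdots & W_L(\omega_{M-1})\otimes V_{M-1}\end{bmatrix}\in\mathbb{C}^{n_vL\times M}$. For sequences $\bm{V}^1,\dots,\bm{V}^Q$, the real $n_vL\times 2MQ$ matrix $\Gamma_L(\{\bm{V}^{i}\}_{i=1}^Q,\bm{\omega})=\begin{bmatrix}\operatorname{Re}F_L(\bm{V}^{1},\bm{\omega}) & \cdots & \operatorname{Re}F_L(\bm{V}^{Q},\bm{\omega}) & \operatorname{Im}F_L(\bm{V}^{1},\bm{\omega}) & \cdots & \operatorname{Im}F_L(\bm{V}^{Q},\bm{\omega})\end{bmatrix}$. Frequency-domain CPE: sequences $\bm{V}^i\in(\mathbb{C}^{n_v})^M$, $i=1,\dots,Q$, of samples $V^i_m=V^i(\omega_m)$ of symmetric spectra at frequencies $\omega_m\in[0,\pi)$ are collectively persistently exciting of order $L$ if $\begin{bmatrix}F_L(\bm{V}^{1},\bm{\omega}) & \cdots & F_L(\bm{V}^{Q},\bm{\omega}) & F_L^*(\bm{V}^{1},\bm{\omega}) & \cdots & F_L^*(\bm{V}^{Q},\bm{\omega})\end{bmatrix}$ has full row rank $n_vL$. *)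

theory Defs
  imports Complex_Main "Jordan_Normal_Form.DL_Rank"
begin

abbreviation cmat :: "real mat \<Rightarrow> complex mat" where
  "cmat A \<equiv> map_mat complex_of_real A"

(* Controllability matrix [B, AB, ..., A^(nx-1) B] with nx = dim_row A. *)
definition ctrb_mat :: "real mat \<Rightarrow> real mat \<Rightarrow> real mat" where
  "ctrb_mat A B = mat (dim_row A) (dim_row A * dim_col B)
     (\<lambda>(i, j). (A ^\<^sub>m (j div dim_col B) * B) $$ (i, j mod dim_col B))"

definition controllable :: "real mat \<Rightarrow> real mat \<Rightarrow> bool" where
  "controllable A B \<longleftrightarrow> vec_space.rank (dim_row A) (ctrb_mat A B) = dim_row A"

definition io_trajectory ::
  "real mat \<Rightarrow> real mat \<Rightarrow> real mat \<Rightarrow> real mat \<Rightarrow> nat \<Rightarrow> (nat \<Rightarrow> real vec) \<Rightarrow> (nat \<Rightarrow> real vec) \<Rightarrow> bool" where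
  "io_trajectory A B C D N u y \<longleftrightarrow>
     (\<forall>k<N. u k \<in> carrier_vec (dim_col B) \<and> y k \<in> carrier_vec (dim_row C)) \<and>
     (\<exists>x :: nat \<Rightarrow> real vec. (\<forall>k<N. x k \<in> carrier_vec (dim_row A)) \<and>
        (\<forall>k. Suc k < N \<longrightarrow> x (Suc k) = A *\<^sub>v x k + B *\<^sub>v u k) \<and>
        (\<forall>k<N. y k = C *\<^sub>v x k + D *\<^sub>v u k))"

definition Wint :: "real set" where
  "Wint = {-pi..<pi}"

definition is_spectrum :: "nat \<Rightarrow> (real \<Rightarrow> complex vec) \<Rightarrow> bool" where
  "is_spectrum n V \<longleftrightarrow>
     (\<forall>w\<in>Wint. V w \<in> carrier_vec n) \<and>
     (\<forall>w\<in>Wint. -w \<in> Wint \<longrightarrow> V w = map_vec cnj (V (-w)))"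

definition io_spectrum ::
  "real mat \<Rightarrow> real mat \<Rightarrow> real mat \<Rightarrow> real mat \<Rightarrow> (real \<Rightarrow> complex vec) \<Rightarrow> (real \<Rightarrow> complex vec) \<Rightarrow> bool" where
  "io_spectrum A B C D U Y \<longleftrightarrow>
     is_spectrum (dim_col B) U \<and> is_spectrum (dim_row C) Y \<and>
     (\<exists>X. is_spectrum (dim_row A) X \<and>
        (\<forall>w\<in>Wint. exp (\<i> * of_real w) \<cdot>\<^sub>v X w = cmat A *\<^sub>v X w + cmat B *\<^sub>v U w \<and>
                   Y w = cmat C *\<^sub>v X w + cmat D *\<^sub>v U w))"

(* F_L(V, omega) for V = (V_0,...,V_{M-1}) with V_m in C^nv:
   column m is W_L(omega_m) \<otimes> V_m, i.e. entry (l*nv + s, m) = e^{j omega_m l} (V_m)_s. *)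
definition F_mat :: "nat \<Rightarrow> nat \<Rightarrow> nat \<Rightarrow> (nat \<Rightarrow> complex vec) \<Rightarrow> (nat \<Rightarrow> real) \<Rightarrow> complex mat" where
  "F_mat nv L M V w = mat (nv * L) M
     (\<lambda>(r, m). exp (\<i> * of_real (w m) * of_nat (r div nv)) * (V m $ (r mod nv)))"

(* Gamma_L({V^i}_{i=1}^Q, omega); the Q sequences are indexed by i < Q (V i is V^{i+1}),
   V i m is the m-th sample of the i-th sequence. *)
definition Gamma_mat :: "nat \<Rightarrow> nat \<Rightarrow> nat \<Rightarrow> nat \<Rightarrow> (nat \<Rightarrow> nat \<Rightarrow> complex vec) \<Rightarrow> (nat \<Rightarrow> real) \<Rightarrow> real mat" where
  "Gamma_mat nv L M Q V w = mat (nv * L) (2 * M * Q)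
     (\<lambda>(r, c). if c < M * Q then Re (F_mat nv L M (V (c div M)) w $$ (r, c mod M))
               else Im (F_mat nv L M (V ((c - M * Q) div M)) w $$ (r, (c - M * Q) mod M)))"

(* [F_L(V^1) ... F_L(V^Q) F_L^*(V^1) ... F_L^*(V^Q)]  (^* = entrywise conjugation) *)
definition CPE_mat :: "nat \<Rightarrow> nat \<Rightarrow> nat \<Rightarrow> nat \<Rightarrow> (nat \<Rightarrow> nat \<Rightarrow> complex vec) \<Rightarrow> (nat \<Rightarrow> real) \<Rightarrow> complex mat" where
  "CPE_mat nv L M Q V w = mat (nv * L) (2 * M * Q)
     (\<lambda>(r, c). if c < M * Q then F_mat nv L M (V (c div M)) w $$ (r, c mod M)
               else cnj (F_mat nv L M (V ((c - M * Q) div M)) w $$ (r, (c - M * Q) mod M)))"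

definition CPE :: "nat \<Rightarrow> nat \<Rightarrow> nat \<Rightarrow> nat \<Rightarrow> (nat \<Rightarrow> nat \<Rightarrow> complex vec) \<Rightarrow> (nat \<Rightarrow> real) \<Rightarrow> bool" where
  "CPE nv L M Q V w \<longleftrightarrow> vec_space.rank (nv * L) (CPE_mat nv L M Q V w) = nv * L"

(* x_{[a,b-1]} = vertical stack of x_a, ..., x_{b-1}, each in R^n *)
definition stack :: "nat \<Rightarrow> (nat \<Rightarrow> real vec) \<Rightarrow> nat \<Rightarrow> nat \<Rightarrow> real vec" where
  "stack n x a b = vec (n * (b - a)) (\<lambda>r. x (a + r div n) $ (r mod n))"

end

theory Submission
  imports Defs
begin

lemma fullrank_leftker:
  fixes K :: "'a::field mat"
  assumes K: "K \<in> carrier_mat n p" and rk: "vec_space.rank n K = n"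
    and g: "\<gamma> \<in> carrier_vec n"
    and ann: "\<forall>j<p. (\<Sum>i<n. \<gamma> $ i * K $$ (i, j)) = 0"
  shows "\<gamma> = 0\<^sub>v n"
proof -
  interpret V: vec_space "TYPE('a)" n .
  have fin: "finite (set (cols K))" by simp
  have li0: "V.lin_indpt {}"
    unfolding V.lin_dep_def by auto
  obtain S where S: "finite S" "maximal S (\<lambda>T. T \<subseteq> set (cols K) \<and> V.lin_indpt T)"
    using maximal_exists_superset[OF fin, of "\<lambda>T. T \<subseteq> set (cols K) \<and> V.lin_indpt T" "{}"] li0
    by auto
  have Ssub: "S \<subseteq> set (cols K)" and Sli: "V.lin_indpt S"
    using S(2) unfolding maximal_def by auto
  have card: "card S = n" using V.rank_card_indpt[OF K S(2)] rk by simp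
  have Scar: "S \<subseteq> carrier_vec n" using Ssub K cols_dim by blast
  have "V.basis S"
    by (rule V.dim_li_is_basis) (use S(1) Scar Sli card V.dim_is_n in auto)
  hence span: "V.span S = carrier_vec n" unfolding V.basis_def by auto
  show ?thesis
  proof (rule eq_vecI)
    show "dim_vec \<gamma> = dim_vec (0\<^sub>v n)" using g by simp
    fix r assume r: "r < dim_vec (0\<^sub>v n)"
    hence r: "r < n" by simp
    have "unit_vec n r \<in> V.span S" using span by simp
    then obtain a T where T: "unit_vec n r = V.lincomb a T" "finite T" "T \<subseteq> S"
      using V.in_spanE by blast
    have Tcar: "T \<subseteq> carrier_vec n" using T(3) Scar by auto
    have "(\<Sum>i<n. \<gamma> $ i * unit_vec n r $ i) = (\<Sum>i<n. if i = r then \<gamma> $ i else 0)"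
      by (rule sum.cong) (auto simp: unit_vec_def)
    hence "\<gamma> $ r = (\<Sum>i<n. \<gamma> $ i * unit_vec n r $ i)"
      using r by (simp add: sum.delta')
    also have "\<dots> = (\<Sum>i<n. \<gamma> $ i * (\<Sum>v\<in>T. a v * v $ i))"
      by (rule sum.cong, simp, simp add: T(1) V.lincomb_index[OF _ Tcar])
    also have "\<dots> = (\<Sum>v\<in>T. a v * (\<Sum>i<n. \<gamma> $ i * v $ i))"
      by (simp add: sum_distrib_left sum_distrib_right mult_ac sum.swap[of _ T])
    also have "\<dots> = 0"
    proof (rule sum.neutral, rule ballI)
      fix v assume "v \<in> T"
      then have "v \<in> set (cols K)" using T(3) Ssub by auto
      then obtain j where j: "j < p" "v = col K j" using K by (auto simp: cols_def)
      have "(\<Sum>i<n. \<gamma> $ i * v $ i) = (\<Sum>i<n. \<gamma> $ i * K $$ (i, j))"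
        using j K by (intro sum.cong) auto
      thus "a v * (\<Sum>i<n. \<gamma> $ i * v $ i) = 0" using ann j by simp
    qed
    finally show "\<gamma> $ r = 0\<^sub>v n $ r" using r by simp
  qed
qed

lemma lin_dep_seq:
  fixes w :: "nat \<Rightarrow> 'a::field vec"
  shows "\<exists>d\<le>n. \<exists>a. \<forall>r<n. w d $ r = (\<Sum>s<d. a s * w s $ r)"
proof -
  define Sq where "Sq = mat\<^sub>r (Suc n) (Suc n)
     (\<lambda>i. if i = n then 0\<^sub>v (Suc n) else vec (Suc n) (\<lambda>s. w s $ i))"
  have Sqc: "Sq \<in> carrier_mat (Suc n) (Suc n)" unfolding Sq_def by simp
  have "det Sq = 0" unfolding Sq_def
    by (rule det_row_0) auto
  then obtain \<alpha> where al: "\<alpha> \<in> carrier_vec (Suc n)" "\<alpha> \<noteq> 0\<^sub>v (Suc n)" "Sq *\<^sub>v \<alpha> = 0\<^sub>v (Suc n)"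
    using det_0_iff_vec_prod_zero_field[OF Sqc] by auto
  have eqs: "(\<Sum>s<Suc n. w s $ r * \<alpha> $ s) = 0" if r: "r < n" for r
  proof -
    have "(Sq *\<^sub>v \<alpha>) $ r = 0" using al(3) r by simp
    moreover have "(Sq *\<^sub>v \<alpha>) $ r = (\<Sum>s<Suc n. w s $ r * \<alpha> $ s)"
      using r al(1) unfolding Sq_def
      by (simp add: scalar_prod_def lessThan_atLeast0 row_def)
    ultimately show ?thesis by simp
  qed
  define D where "D = {s. s < Suc n \<and> \<alpha> $ s \<noteq> 0}"
  have "D \<noteq> {}"
  proof
    assume "D = {}"
    hence "\<alpha> = 0\<^sub>v (Suc n)" using al(1) unfolding D_def by (intro eq_vecI) auto
    with al(2) show False by simp
  qed
  moreover have finD: "finite D" unfolding D_def by simp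
  ultimately have dD: "Max D \<in> D" by simp
  define d where "d = Max D"
  have dn: "d \<le> n" and ad: "\<alpha> $ d \<noteq> 0" using dD unfolding d_def D_def by auto
  have zero: "\<alpha> $ s = 0" if "d < s" "s < Suc n" for s
    using Max_ge[OF finD, of s] that unfolding d_def D_def by fastforce
  show ?thesis
  proof (intro exI conjI allI impI)
    show "d \<le> n" by fact
    fix r assume r: "r < n"
    have "(\<Sum>s<Suc n. w s $ r * \<alpha> $ s) = (\<Sum>s<Suc d. w s $ r * \<alpha> $ s)"
    proof -
      have U: "{..<Suc n} = {..<Suc d} \<union> {Suc d..<Suc n}" using dn by auto
      have Z: "(\<Sum>s\<in>{Suc d..<Suc n}. w s $ r * \<alpha> $ s) = 0"
        by (rule sum.neutral) (auto simp: zero)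
      have "(\<Sum>s\<in>{..<Suc d} \<union> {Suc d..<Suc n}. w s $ r * \<alpha> $ s)
         = (\<Sum>s<Suc d. w s $ r * \<alpha> $ s) + (\<Sum>s\<in>{Suc d..<Suc n}. w s $ r * \<alpha> $ s)"
        by (rule sum.union_disjoint) auto
      thus ?thesis unfolding U Z by simp
    qed
    hence "(\<Sum>s<d. w s $ r * \<alpha> $ s) + w d $ r * \<alpha> $ d = 0" using eqs[OF r] by (simp del: sum.lessThan_Suc add: sum.lessThan_Suc[of _ d])
    hence "w d $ r * \<alpha> $ d = - (\<Sum>s<d. w s $ r * \<alpha> $ s)"
      by (simp add: eq_neg_iff_add_eq_0 add.commute)
    hence "w d $ r = - (\<Sum>s<d. w s $ r * \<alpha> $ s) / \<alpha> $ d"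
      using ad by (metis minus_divide_left nonzero_eq_divide_eq)
    also have "\<dots> = (\<Sum>s<d. (- \<alpha> $ s / \<alpha> $ d) * w s $ r)"
      by (simp add: sum_divide_distrib sum_negf field_simps)
    finally show "w d $ r = (\<Sum>s<d. (- \<alpha> $ s / \<alpha> $ d) * w s $ r)" .
  qed
qed

lemma mat_vec_lincomb:
  fixes T :: "'a::comm_ring_1 mat"
  assumes T: "T \<in> carrier_mat m n" and g: "\<forall>s\<in>S. g s \<in> carrier_vec n"
  shows "T *\<^sub>v vec n (\<lambda>r. \<Sum>s\<in>S. a s * g s $ r) = vec m (\<lambda>i. \<Sum>s\<in>S. a s * (T *\<^sub>v g s) $ i)"
proof (rule eq_vecI)
  fix i assume "i < dim_vec (vec m (\<lambda>i. \<Sum>s\<in>S. a s * (T *\<^sub>v g s) $ i))"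
  hence i: "i < m" by simp
  have "(T *\<^sub>v vec n (\<lambda>r. \<Sum>s\<in>S. a s * g s $ r)) $ i = (\<Sum>j<n. T $$ (i, j) * (\<Sum>s\<in>S. a s * g s $ j))"
    using T i by (simp add: scalar_prod_def row_def lessThan_atLeast0)
  also have "\<dots> = (\<Sum>s\<in>S. a s * (\<Sum>j<n. T $$ (i, j) * g s $ j))"
    by (simp add: sum_distrib_left mult_ac sum.swap[of _ S])
  also have "\<dots> = (\<Sum>s\<in>S. a s * (T *\<^sub>v g s) $ i)"
    using T i g by (intro sum.cong) (auto simp: scalar_prod_def row_def lessThan_atLeast0)
  finally show "(T *\<^sub>v vec n (\<lambda>r. \<Sum>s\<in>S. a s * g s $ r)) $ i = vec m (\<lambda>i. \<Sum>s\<in>S. a s * (T *\<^sub>v g s) $ i) $ i"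
    using i by simp
qed (use T in simp)

lemma iter_carrier:
  assumes T: "T \<in> carrier_mat n n" and v: "v \<in> carrier_vec n"
  shows "((\<lambda>x. T *\<^sub>v x) ^^ k) v \<in> carrier_vec n"
  by (induction k) (use T v in auto)

lemma iter_lincomb:
  fixes T :: "'a::comm_ring_1 mat"
  assumes T: "T \<in> carrier_mat n n" and g: "\<forall>s\<in>S. g s \<in> carrier_vec n"
  shows "((\<lambda>x. T *\<^sub>v x) ^^ k) (vec n (\<lambda>r. \<Sum>s\<in>S. a s * g s $ r))
       = vec n (\<lambda>r. \<Sum>s\<in>S. a s * ((\<lambda>x. T *\<^sub>v x) ^^ k) (g s) $ r)"
proof (induction k)
  case 0 show ?case by simp
next
  case (Suc k)
  have "((\<lambda>x. T *\<^sub>v x) ^^ Suc k) (vec n (\<lambda>r. \<Sum>s\<in>S. a s * g s $ r))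
     = T *\<^sub>v vec n (\<lambda>r. \<Sum>s\<in>S. a s * ((\<lambda>x. T *\<^sub>v x) ^^ k) (g s) $ r)"
    using Suc by simp
  also have "\<dots> = vec n (\<lambda>r. \<Sum>s\<in>S. a s * (T *\<^sub>v ((\<lambda>x. T *\<^sub>v x) ^^ k) (g s)) $ r)"
    by (rule mat_vec_lincomb[OF T]) (use g iter_carrier[OF T] in auto)
  finally show ?case by simp
qed

lemma propagate:
  fixes T :: "'a::field mat"
  assumes T: "T \<in> carrier_mat n n" and E: "E \<in> carrier_mat p n" and v: "v \<in> carrier_vec n"
    and dep: "\<forall>r<n. ((\<lambda>x. T *\<^sub>v x) ^^ d) v $ r = (\<Sum>s<d. a s * ((\<lambda>x. T *\<^sub>v x) ^^ s) v $ r)"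
    and low: "\<forall>s<d. E *\<^sub>v ((\<lambda>x. T *\<^sub>v x) ^^ s) v = 0\<^sub>v p"
  shows "E *\<^sub>v ((\<lambda>x. T *\<^sub>v x) ^^ j) v = 0\<^sub>v p"
proof (induction j rule: less_induct)
  case (less j)
  let ?it = "\<lambda>k. ((\<lambda>x. T *\<^sub>v x) ^^ k)"
  show ?case
  proof (cases "j < d")
    case True thus ?thesis using low by simp
  next
    case False
    have itd: "?it d v = vec n (\<lambda>r. \<Sum>s<d. a s * ?it s v $ r)"
      using dep iter_carrier[OF T v] by (intro eq_vecI) auto
    have jd: "j = (j - d) + d" using False by simp
    have "?it j v = ?it (j - d) (?it d v)"
      by (metis jd funpow_add comp_apply)
    also have "\<dots> = vec n (\<lambda>r. \<Sum>s<d. a s * ?it (j - d) (?it s v) $ r)"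
      unfolding itd by (rule iter_lincomb[OF T]) (use iter_carrier[OF T v] in auto)
    also have "\<dots> = vec n (\<lambda>r. \<Sum>s<d. a s * ?it (j - d + s) v $ r)"
      by (simp add: funpow_add)
    finally have "E *\<^sub>v ?it j v = vec p (\<lambda>i. \<Sum>s<d. a s * (E *\<^sub>v ?it (j - d + s) v) $ i)"
      using mat_vec_lincomb[OF E, of "{..<d}" "\<lambda>s. ?it (j - d + s) v"] iter_carrier[OF T v] by simp
    also have "\<dots> = 0\<^sub>v p"
    proof (rule eq_vecI)
      fix i assume "i < dim_vec (0\<^sub>v p)"
      hence i: "i < p" by simp
      have "\<forall>s<d. (E *\<^sub>v ?it (j - d + s) v) $ i = 0"
        using less[of "j - d + _"] False i by auto
      thus "vec p (\<lambda>i. \<Sum>s<d. a s * (E *\<^sub>v ?it (j - d + s) v) $ i) $ i = 0\<^sub>v p $ i"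
        using i by simp
    qed simp
    finally show ?thesis .
  qed
qed

lemma real_self_scalar_zero:
  fixes v :: "real vec"
  assumes v: "v \<in> carrier_vec n" and z: "v \<bullet> v = 0"
  shows "v = 0\<^sub>v n"
proof -
  have "(\<Sum>i\<in>{0..<n}. v $ i * v $ i) = 0" using z v by (simp add: scalar_prod_def)
  hence "\<forall>i\<in>{0..<n}. v $ i * v $ i = 0"
    by (subst (asm) sum_nonneg_eq_0_iff) auto
  thus ?thesis using v by (intro eq_vecI) auto
qed

lemma real_solve:
  fixes G :: "real mat"
  assumes G: "G \<in> carrier_mat n p"
    and lk: "\<forall>\<gamma>\<in>carrier_vec n. transpose_mat G *\<^sub>v \<gamma> = 0\<^sub>v p \<longrightarrow> \<gamma> = 0\<^sub>v n"
    and b: "b \<in> carrier_vec n"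
  shows "\<exists>g\<in>carrier_vec p. G *\<^sub>v g = b"
proof -
  define H where "H = G * transpose_mat G"
  have H: "H \<in> carrier_mat n n" using G unfolding H_def by simp
  have "det H \<noteq> 0"
  proof
    assume "det H = 0"
    then obtain v where v: "v \<in> carrier_vec n" "v \<noteq> 0\<^sub>v n" "H *\<^sub>v v = 0\<^sub>v n"
      using det_0_iff_vec_prod_zero_field[OF H] by auto
    have Gt: "transpose_mat G *\<^sub>v v \<in> carrier_vec p" using G v by simp
    have "(transpose_mat G *\<^sub>v v) \<bullet> (transpose_mat G *\<^sub>v v) = v \<bullet> (G *\<^sub>v (transpose_mat G *\<^sub>v v))"
      by (rule transpose_vec_mult_scalar[OF G Gt v(1)])
    also have "G *\<^sub>v (transpose_mat G *\<^sub>v v) = H *\<^sub>v v"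
      unfolding H_def using G v by simp
    also have "v \<bullet> \<dots> = 0" using v by simp
    finally have "transpose_mat G *\<^sub>v v = 0\<^sub>v p" using real_self_scalar_zero[OF Gt] by simp
    with lk v show False by auto
  qed
  from det_non_zero_imp_unit[OF H this, of "()"]
  obtain P where P: "P \<in> carrier_mat n n" "H * P = 1\<^sub>m n"
    unfolding Units_def ring_mat_def by auto
  show ?thesis
  proof (intro bexI)
    show "transpose_mat G *\<^sub>v (P *\<^sub>v b) \<in> carrier_vec p" using G P b by simp
    have "(H * P) *\<^sub>v b = H *\<^sub>v (P *\<^sub>v b)" using H P(1) b by simp
    also have "\<dots> = G *\<^sub>v (transpose_mat G *\<^sub>v (P *\<^sub>v b))"
      unfolding H_def using G P b by (intro assoc_mult_mat_vec) auto
    finally have "G *\<^sub>v (transpose_mat G *\<^sub>v (P *\<^sub>v b)) = (H * P) *\<^sub>v b" ..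
    also have "\<dots> = b" using P b by simp
    finally show "G *\<^sub>v (transpose_mat G *\<^sub>v (P *\<^sub>v b)) = b" .
  qed
qed

lemma sum_blocks: fixes f :: "nat \<Rightarrow> 'a::comm_monoid_add" shows "(\<Sum>r<n * N. f r) = (\<Sum>k<N. \<Sum>q<n. f (k * n + q))"
proof -
  have "(\<Sum>q<n. f (k * n + q)) = sum f {k * n..<k * n + n}" for k
    using sum.shift_bounds_nat_ivl[of f 0 "k * n" n] by (simp add: atLeast0LessThan add.commute)
  thus ?thesis using sum.nat_group[of f n N] by (simp add: mult.commute)
qed


definition RI :: "nat \<Rightarrow> nat \<Rightarrow> nat \<Rightarrow> (nat \<Rightarrow> nat \<Rightarrow> complex) \<Rightarrow> real mat" where
  "RI M Q n a = mat n (2 * M * Q) (\<lambda>(r, c). if c < M * Q then Re (a r c) else Im (a r (c - M * Q)))"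

definition hOf :: "nat \<Rightarrow> nat \<Rightarrow> real vec \<Rightarrow> nat \<Rightarrow> complex" where
  "hOf M Q g c = complex_of_real (g $ c) - \<i> * complex_of_real (g $ (c + M * Q))"

lemma RI_carrier[simp]: "RI M Q n a \<in> carrier_mat n (2 * M * Q)"
  unfolding RI_def by simp

lemma RI_dim[simp]: "dim_row (RI M Q n a) = n" "dim_col (RI M Q n a) = 2 * M * Q"
  unfolding RI_def by simp_all

lemma twoMQ: "2 * M * Q = M * Q + M * Q" for M Q :: nat by (simp add: algebra_simps)

lemma RI_mult:
  assumes g: "g \<in> carrier_vec (2 * M * Q)" and r: "r < n"
  shows "(RI M Q n a *\<^sub>v g) $ r = Re (\<Sum>c<M * Q. hOf M Q g c * a r c)"
proof -
  let ?P = "M * Q"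
  let ?f = "\<lambda>c. (if c < ?P then Re (a r c) else Im (a r (c - ?P))) * g $ c"
  have "(RI M Q n a *\<^sub>v g) $ r = sum ?f {0..<2 * M * Q}"
    using g r unfolding RI_def by (simp add: scalar_prod_def row_def)
  also have "\<dots> = sum ?f {0..<?P} + sum ?f {?P..<?P + ?P}"
    unfolding twoMQ by (rule sum.atLeastLessThan_concat[symmetric]) simp_all
  also have "sum ?f {?P..<?P + ?P} = sum (\<lambda>c. ?f (c + ?P)) {0..<?P}"
    using sum.shift_bounds_nat_ivl[of ?f 0 ?P ?P] by simp
  also have "\<dots> = (\<Sum>c\<in>{0..<?P}. Im (a r c) * g $ (c + ?P))" by (rule sum.cong) simp_all
  also have "sum ?f {0..<?P} = (\<Sum>c\<in>{0..<?P}. Re (a r c) * g $ c)" by (rule sum.cong) simp_all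
  also have "(\<Sum>c\<in>{0..<?P}. Re (a r c) * g $ c) + (\<Sum>c\<in>{0..<?P}. Im (a r c) * g $ (c + ?P))
     = (\<Sum>c\<in>{0..<?P}. Re (a r c) * g $ c + Im (a r c) * g $ (c + ?P))"
    by (rule sum.distrib[symmetric])
  also have "\<dots> = (\<Sum>c<?P. Re (hOf M Q g c * a r c))"
    by (rule sum.cong) (simp_all add: hOf_def atLeast0LessThan algebra_simps)
  also have "\<dots> = Re (\<Sum>c<?P. hOf M Q g c * a r c)" by (rule Re_sum[symmetric])
  finally show ?thesis .
qed

lemma RI_leftker:
  assumes gam: "\<gamma> \<in> carrier_vec n" and z: "transpose_mat (RI M Q n a) *\<^sub>v \<gamma> = 0\<^sub>v (2 * M * Q)"
    and c: "c < M * Q"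
  shows "(\<Sum>r<n. complex_of_real (\<gamma> $ r) * a r c) = 0"
proof -
  have e: "(\<Sum>r<n. (RI M Q n a) $$ (r, j) * \<gamma> $ r) = 0" if j: "j < 2 * M * Q" for j
  proof -
    have "(transpose_mat (RI M Q n a) *\<^sub>v \<gamma>) $ j = (\<Sum>r<n. (RI M Q n a) $$ (r, j) * \<gamma> $ r)"
      using j gam by (simp add: scalar_prod_def lessThan_atLeast0 col_def)
    thus ?thesis using z j by simp
  qed
  have c1: "c < 2 * M * Q" and c2: "c + M * Q < 2 * M * Q" using c unfolding twoMQ by simp_all
  have "(\<Sum>r<n. (RI M Q n a) $$ (r, c) * \<gamma> $ r) = (\<Sum>r<n. Re (a r c) * \<gamma> $ r)"
    by (rule sum.cong) (simp_all add: RI_def c c1)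
  hence 1: "(\<Sum>r<n. Re (a r c) * \<gamma> $ r) = 0" using e[OF c1] by simp
  have "(\<Sum>r<n. (RI M Q n a) $$ (r, c + M * Q) * \<gamma> $ r) = (\<Sum>r<n. Im (a r c) * \<gamma> $ r)"
    by (rule sum.cong) (simp_all add: RI_def c2)
  hence 2: "(\<Sum>r<n. Im (a r c) * \<gamma> $ r) = 0" using e[OF c2] by simp
  have "Re (\<Sum>r<n. complex_of_real (\<gamma> $ r) * a r c) = (\<Sum>r<n. Re (a r c) * \<gamma> $ r)"
    by (simp add: Re_sum mult.commute)
  moreover have "Im (\<Sum>r<n. complex_of_real (\<gamma> $ r) * a r c) = (\<Sum>r<n. Im (a r c) * \<gamma> $ r)"
    by (simp add: Im_sum mult.commute)
  ultimately show ?thesis using 1 2 by (simp add: complex_eq_iff)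
qed

lemma Gamma_RI:
  assumes M: "M \<ge> 1"
  shows "Gamma_mat nv N M Q V w = RI M Q (nv * N)
    (\<lambda>r c. exp (\<i> * of_real (w (c mod M)) * of_nat (r div nv)) * V (c div M) (c mod M) $ (r mod nv))"
proof (rule eq_matI)
  fix r c assume rc: "r < dim_row (RI M Q (nv * N)
    (\<lambda>r c. exp (\<i> * of_real (w (c mod M)) * of_nat (r div nv)) * V (c div M) (c mod M) $ (r mod nv)))"
    "c < dim_col (RI M Q (nv * N)
    (\<lambda>r c. exp (\<i> * of_real (w (c mod M)) * of_nat (r div nv)) * V (c div M) (c mod M) $ (r mod nv)))"
  hence r: "r < nv * N" and c: "c < 2 * M * Q" by (simp_all add: RI_def)
  have m: "c mod M < M" "(c - M * Q) mod M < M" using M by auto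
  show "Gamma_mat nv N M Q V w $$ (r, c) = RI M Q (nv * N)
    (\<lambda>r c. exp (\<i> * of_real (w (c mod M)) * of_nat (r div nv)) * V (c div M) (c mod M) $ (r mod nv)) $$ (r, c)"
  proof -
    have c': "c < 2 * M * Q" using c .
    have Fe: "F_mat nv N M V' w $$ (r, m) = exp (\<i> * of_real (w m) * of_nat (r div nv)) * (V' m $ (r mod nv))"
      if "m < M" for V' m
      unfolding F_mat_def by (simp only: index_mat(1)[OF r that] case_prod_conv)
    have Ge: "Gamma_mat nv N M Q V w $$ (r, c) = (if c < M * Q then Re (F_mat nv N M (V (c div M)) w $$ (r, c mod M))
               else Im (F_mat nv N M (V ((c - M * Q) div M)) w $$ (r, (c - M * Q) mod M)))"
      unfolding Gamma_mat_def by (simp only: index_mat(1)[OF r c'] case_prod_conv)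
    have Re: "RI M Q (nv * N) a $$ (r, c) = (if c < M * Q then Re (a r c) else Im (a r (c - M * Q)))" for a
      unfolding RI_def by (simp only: index_mat(1)[OF r c'] case_prod_conv)
    show ?thesis unfolding Ge Re Fe[OF m(1)] Fe[OF m(2)] by (simp only: div_mult_mod_eq)
  qed
qed (simp_all add: Gamma_mat_def RI_def)




lemma cmat_index:
  assumes "A \<in> carrier_mat n m" "v \<in> carrier_vec m" "i < n"
  shows "row (cmat A) i \<bullet> v = (\<Sum>j<m. complex_of_real (A $$ (i, j)) * v $ j)"
  using assms by (simp add: scalar_prod_def row_def lessThan_atLeast0)

lemma Re_sum_ofreal: "Re (\<Sum>j\<in>S. complex_of_real (a j) * z j) = (\<Sum>j\<in>S. a j * Re (z j))"
  by (simp add: Re_sum)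

locale lti =
  fixes A B C D :: "real mat" and nx nu ny M Q :: nat
    and w :: "nat \<Rightarrow> real" and U X Y :: "nat \<Rightarrow> nat \<Rightarrow> complex vec"
  assumes A: "A \<in> carrier_mat nx nx" and B: "B \<in> carrier_mat nx nu"
    and C: "C \<in> carrier_mat ny nx" and D: "D \<in> carrier_mat ny nu"
    and M: "M \<ge> 1"
    and UXY: "\<forall>i<Q. \<forall>m<M. U i m \<in> carrier_vec nu \<and> X i m \<in> carrier_vec nx \<and> Y i m \<in> carrier_vec ny \<and>
        exp (\<i> * of_real (w m)) \<cdot>\<^sub>v X i m = cmat A *\<^sub>v X i m + cmat B *\<^sub>v U i m \<and>
        Y i m = cmat C *\<^sub>v X i m + cmat D *\<^sub>v U i m"
begin

definition Uc where "Uc c = U (c div M) (c mod M)"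
definition Xc where "Xc c = X (c div M) (c mod M)"
definition Yc where "Yc c = Y (c div M) (c mod M)"
definition zz where "zz c k = exp (\<i> * of_real (w (c mod M)) * of_nat k)"

lemma cdiv: "c < M * Q \<Longrightarrow> c div M < Q \<and> c mod M < M"
  using M by (auto simp: less_mult_imp_div_less mult.commute)

lemma carr: assumes "c < M * Q"
  shows "Uc c \<in> carrier_vec nu" "Xc c \<in> carrier_vec nx" "Yc c \<in> carrier_vec ny"
  using UXY cdiv[OF assms] unfolding Uc_def Xc_def Yc_def by blast+

lemma zz_Suc: "zz c (Suc k) = exp (\<i> * of_real (w (c mod M))) * zz c k"
  unfolding zz_def by (simp add: exp_add[symmetric] algebra_simps)

lemma zz_0: "zz c 0 = 1" unfolding zz_def by simp

lemma xrel: assumes c: "c < M * Q" and r: "r < nx"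
  shows "exp (\<i> * of_real (w (c mod M))) * Xc c $ r =
     (\<Sum>q<nx. complex_of_real (A $$ (r, q)) * Xc c $ q) + (\<Sum>l<nu. complex_of_real (B $$ (r, l)) * Uc c $ l)"
proof -
  have "(exp (\<i> * of_real (w (c mod M))) \<cdot>\<^sub>v Xc c) $ r = (cmat A *\<^sub>v Xc c + cmat B *\<^sub>v Uc c) $ r"
    using UXY cdiv[OF c] unfolding Xc_def Uc_def by simp
  thus ?thesis using carr[OF c] r A B by (simp add: cmat_index)
qed

lemma yrel: assumes c: "c < M * Q" and r: "r < ny"
  shows "Yc c $ r =
     (\<Sum>q<nx. complex_of_real (C $$ (r, q)) * Xc c $ q) + (\<Sum>l<nu. complex_of_real (D $$ (r, l)) * Uc c $ l)"
proof -
  have "Yc c $ r = (cmat C *\<^sub>v Xc c + cmat D *\<^sub>v Uc c) $ r"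
    using UXY cdiv[OF c] unfolding Xc_def Uc_def Yc_def by simp
  thus ?thesis using carr[OF c] r C D by (simp add: cmat_index)
qed

definition xh where "xh h k = vec nx (\<lambda>r. Re (\<Sum>c<M * Q. h c * zz c k * Xc c $ r))"
definition uh where "uh h k = vec nu (\<lambda>r. Re (\<Sum>c<M * Q. h c * zz c k * Uc c $ r))"
definition yh where "yh h k = vec ny (\<lambda>r. Re (\<Sum>c<M * Q. h c * zz c k * Yc c $ r))"

lemma xh_carr[simp]: "xh h k \<in> carrier_vec nx" unfolding xh_def by simp
lemma uh_carr[simp]: "uh h k \<in> carrier_vec nu" unfolding uh_def by simp
lemma yh_carr[simp]: "yh h k \<in> carrier_vec ny" unfolding yh_def by simp
lemma xh_dim[simp]: "dim_vec (xh h k) = nx" unfolding xh_def by simp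
lemma uh_dim[simp]: "dim_vec (uh h k) = nu" unfolding uh_def by simp
lemma yh_dim[simp]: "dim_vec (yh h k) = ny" unfolding yh_def by simp

lemma lin_helper:
  fixes F :: "nat \<Rightarrow> complex vec" and a :: "nat \<Rightarrow> real"
  shows "(\<Sum>q<n. a q * Re (\<Sum>c<P. h c * zk c * F c $ q))
       = Re (\<Sum>c<P. h c * zk c * (\<Sum>q<n. complex_of_real (a q) * F c $ q))"
proof -
  have "(\<Sum>c<P. h c * zk c * (\<Sum>q<n. complex_of_real (a q) * F c $ q))
     = (\<Sum>q<n. complex_of_real (a q) * (\<Sum>c<P. h c * zk c * F c $ q))"
    by (simp add: sum_distrib_left sum.swap[of _ "{..<n}"] mult_ac)
  thus ?thesis by (simp add: Re_sum_ofreal)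
qed

lemma xh_Suc: "xh h (Suc k) = A *\<^sub>v xh h k + B *\<^sub>v uh h k"
proof (rule eq_vecI)
  fix r assume "r < dim_vec (A *\<^sub>v xh h k + B *\<^sub>v uh h k)"
  hence r: "r < nx" using B by simp
  have "(A *\<^sub>v xh h k + B *\<^sub>v uh h k) $ r
     = (\<Sum>q<nx. A $$ (r, q) * Re (\<Sum>c<M * Q. h c * zz c k * Xc c $ q))
     + (\<Sum>l<nu. B $$ (r, l) * Re (\<Sum>c<M * Q. h c * zz c k * Uc c $ l))"
    using r A B by (simp add: scalar_prod_def row_def lessThan_atLeast0 xh_def uh_def)
  also have "\<dots> = Re (\<Sum>c<M * Q. h c * zz c k * (\<Sum>q<nx. complex_of_real (A $$ (r, q)) * Xc c $ q))
      + Re (\<Sum>c<M * Q. h c * zz c k * (\<Sum>l<nu. complex_of_real (B $$ (r, l)) * Uc c $ l))"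
    by (simp only: lin_helper)
  also have "\<dots> = Re ((\<Sum>c<M * Q. h c * zz c k * (\<Sum>q<nx. complex_of_real (A $$ (r, q)) * Xc c $ q))
      + (\<Sum>c<M * Q. h c * zz c k * (\<Sum>l<nu. complex_of_real (B $$ (r, l)) * Uc c $ l)))"
    by (simp only: plus_complex.sel)
  also have "\<dots> = Re (\<Sum>c<M * Q. h c * zz c k * ((\<Sum>q<nx. complex_of_real (A $$ (r, q)) * Xc c $ q)
      + (\<Sum>l<nu. complex_of_real (B $$ (r, l)) * Uc c $ l)))"
    by (simp only: sum.distrib[symmetric] distrib_left[symmetric])
  also have "\<dots> = Re (\<Sum>c<M * Q. h c * zz c (Suc k) * Xc c $ r)"
  proof (rule arg_cong[where f = Re], rule sum.cong)
    fix c assume "c \<in> {..<M * Q}"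
    hence c: "c < M * Q" by simp
    have "h c * zz c k * ((\<Sum>q<nx. complex_of_real (A $$ (r, q)) * Xc c $ q)
      + (\<Sum>l<nu. complex_of_real (B $$ (r, l)) * Uc c $ l))
      = h c * zz c k * (exp (\<i> * of_real (w (c mod M))) * Xc c $ r)"
      using xrel[OF c r] by simp
    also have "\<dots> = h c * zz c (Suc k) * Xc c $ r" by (simp add: zz_Suc mult_ac)
    finally show "h c * zz c k * ((\<Sum>q<nx. complex_of_real (A $$ (r, q)) * Xc c $ q)
      + (\<Sum>l<nu. complex_of_real (B $$ (r, l)) * Uc c $ l)) = h c * zz c (Suc k) * Xc c $ r" .
  qed simp
  finally show "xh h (Suc k) $ r = (A *\<^sub>v xh h k + B *\<^sub>v uh h k) $ r"
    using r by (simp add: xh_def)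
qed (use A B in simp)

lemma yh_eq: "yh h k = C *\<^sub>v xh h k + D *\<^sub>v uh h k"
proof (rule eq_vecI)
  fix r assume "r < dim_vec (C *\<^sub>v xh h k + D *\<^sub>v uh h k)"
  hence r: "r < ny" using D by simp
  have "(C *\<^sub>v xh h k + D *\<^sub>v uh h k) $ r
     = (\<Sum>q<nx. C $$ (r, q) * Re (\<Sum>c<M * Q. h c * zz c k * Xc c $ q))
     + (\<Sum>l<nu. D $$ (r, l) * Re (\<Sum>c<M * Q. h c * zz c k * Uc c $ l))"
    using r C D by (simp add: scalar_prod_def row_def lessThan_atLeast0 xh_def uh_def)
  also have "\<dots> = Re (\<Sum>c<M * Q. h c * zz c k * (\<Sum>q<nx. complex_of_real (C $$ (r, q)) * Xc c $ q))
      + Re (\<Sum>c<M * Q. h c * zz c k * (\<Sum>l<nu. complex_of_real (D $$ (r, l)) * Uc c $ l))"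
    by (simp only: lin_helper)
  also have "\<dots> = Re ((\<Sum>c<M * Q. h c * zz c k * (\<Sum>q<nx. complex_of_real (C $$ (r, q)) * Xc c $ q))
      + (\<Sum>c<M * Q. h c * zz c k * (\<Sum>l<nu. complex_of_real (D $$ (r, l)) * Uc c $ l)))"
    by (simp only: plus_complex.sel)
  also have "\<dots> = Re (\<Sum>c<M * Q. h c * zz c k * ((\<Sum>q<nx. complex_of_real (C $$ (r, q)) * Xc c $ q)
      + (\<Sum>l<nu. complex_of_real (D $$ (r, l)) * Uc c $ l)))"
    by (simp only: sum.distrib[symmetric] distrib_left[symmetric])
  also have "\<dots> = Re (\<Sum>c<M * Q. h c * zz c k * Yc c $ r)"
    by (rule arg_cong[where f = Re], rule sum.cong, simp, simp add: yrel[OF _ r])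
  finally show "yh h k $ r = (C *\<^sub>v xh h k + D *\<^sub>v uh h k) $ r"
    using r by (simp add: yh_def)
qed (use C D in simp)



end

context lti begin
lemma Gamma_U:
  assumes g: "g \<in> carrier_vec (2 * M * Q)" and r: "r < nu * N"
  shows "(Gamma_mat nu N M Q U w *\<^sub>v g) $ r = uh (hOf M Q g) (r div nu) $ (r mod nu)"
proof -
  have "nu > 0" using r by (cases nu) auto
  hence rm: "r mod nu < nu" by simp
  have e1: "(Gamma_mat nu N M Q U w *\<^sub>v g) $ r = Re (\<Sum>c<M * Q. hOf M Q g c *
      (exp (\<i> * of_real (w (c mod M)) * of_nat (r div nu)) * U (c div M) (c mod M) $ (r mod nu)))"
    unfolding Gamma_RI[OF M] by (rule RI_mult[OF g r])
  have e2: "uh (hOf M Q g) (r div nu) $ (r mod nu) = Re (\<Sum>c<M * Q. hOf M Q g c * zz c (r div nu) * Uc c $ (r mod nu))"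
    unfolding uh_def by (rule index_vec) fact
  have e3: "hOf M Q g c * zz c (r div nu) * Uc c $ (r mod nu) = hOf M Q g c *
      (exp (\<i> * of_real (w (c mod M)) * of_nat (r div nu)) * U (c div M) (c mod M) $ (r mod nu))" for c
    unfolding zz_def Uc_def by (rule mult.assoc)
  show ?thesis by (simp only: e1 e2 e3)
qed

lemma Gamma_Y:
  assumes g: "g \<in> carrier_vec (2 * M * Q)" and r: "r < ny * N"
  shows "(Gamma_mat ny N M Q Y w *\<^sub>v g) $ r = yh (hOf M Q g) (r div ny) $ (r mod ny)"
proof -
  have "ny > 0" using r by (cases ny) auto
  hence rm: "r mod ny < ny" by simp
  have e1: "(Gamma_mat ny N M Q Y w *\<^sub>v g) $ r = Re (\<Sum>c<M * Q. hOf M Q g c *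
      (exp (\<i> * of_real (w (c mod M)) * of_nat (r div ny)) * Y (c div M) (c mod M) $ (r mod ny)))"
    unfolding Gamma_RI[OF M] by (rule RI_mult[OF g r])
  have e2: "yh (hOf M Q g) (r div ny) $ (r mod ny) = Re (\<Sum>c<M * Q. hOf M Q g c * zz c (r div ny) * Yc c $ (r mod ny))"
    unfolding yh_def by (rule index_vec) fact
  have e3: "hOf M Q g c * zz c (r div ny) * Yc c $ (r mod ny) = hOf M Q g c *
      (exp (\<i> * of_real (w (c mod M)) * of_nat (r div ny)) * Y (c div M) (c mod M) $ (r mod ny))" for c
    unfolding zz_def Yc_def by (rule mult.assoc)
  show ?thesis by (simp only: e1 e2 e3)
qed


lemma cpe_zero:
  assumes cpe: "CPE nu N M Q U w"
    and z: "\<forall>c<M * Q. (\<Sum>k<N. \<Sum>q<nu. complex_of_real (\<beta> k $ q) * (zz c k * Uc c $ q)) = 0"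
    and k: "k < N" and q: "q < nu"
  shows "\<beta> k $ q = 0"
proof -
  define \<gamma> where "\<gamma> = vec (nu * N) (\<lambda>r. complex_of_real (\<beta> (r div nu) $ (r mod nu)))"
  let ?K = "CPE_mat nu N M Q U w"
  have K: "?K \<in> carrier_mat (nu * N) (2 * M * Q)" unfolding CPE_mat_def by simp
  have rk: "vec_space.rank (nu * N) ?K = nu * N" using cpe unfolding CPE_def .
  have gc: "\<gamma> \<in> carrier_vec (nu * N)" unfolding \<gamma>_def by simp
  have idx: "k' * nu + q' < nu * N" if "k' < N" "q' < nu" for k' q'
  proof -
    have "k' * nu + q' < k' * nu + nu" using that by simp
    also have "\<dots> = Suc k' * nu" by simp
    also have "\<dots> \<le> N * nu" using that by (intro mult_right_mono) auto
    finally show ?thesis by (simp add: mult.commute)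
  qed
  have base: "(\<Sum>i<nu * N. \<gamma> $ i * (zz c (i div nu) * Uc c $ (i mod nu))) = 0" if c: "c < M * Q" for c
  proof -
    have "(\<Sum>i<nu * N. \<gamma> $ i * (zz c (i div nu) * Uc c $ (i mod nu)))
       = (\<Sum>k<N. \<Sum>q<nu. \<gamma> $ (k * nu + q) * (zz c ((k * nu + q) div nu) * Uc c $ ((k * nu + q) mod nu)))"
      by (rule sum_blocks)
    also have "\<dots> = (\<Sum>k<N. \<Sum>q<nu. complex_of_real (\<beta> k $ q) * (zz c k * Uc c $ q))"
      by (intro sum.cong refl) (simp add: \<gamma>_def idx)
    finally show ?thesis using z c by simp
  qed
  have ann: "\<forall>j<2 * M * Q. (\<Sum>i<nu * N. \<gamma> $ i * ?K $$ (i, j)) = 0"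
  proof (intro allI impI)
    fix j assume j: "j < 2 * M * Q"
    show "(\<Sum>i<nu * N. \<gamma> $ i * ?K $$ (i, j)) = 0"
    proof (cases "j < M * Q")
      case True
      have "(\<Sum>i<nu * N. \<gamma> $ i * ?K $$ (i, j)) = (\<Sum>i<nu * N. \<gamma> $ i * (zz j (i div nu) * Uc j $ (i mod nu)))"
        using True cdiv[OF True] j by (intro sum.cong refl) (simp add: CPE_mat_def F_mat_def zz_def Uc_def)
      thus ?thesis using base[OF True] by simp
    next
      case False
      let ?c = "j - M * Q"
      have c: "?c < M * Q" using j False by simp
      have "(\<Sum>i<nu * N. \<gamma> $ i * ?K $$ (i, j))
          = (\<Sum>i<nu * N. \<gamma> $ i * cnj (zz ?c (i div nu) * Uc ?c $ (i mod nu)))"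
        using False cdiv[OF c] j by (intro sum.cong refl) (simp add: CPE_mat_def F_mat_def zz_def Uc_def)
      also have "\<dots> = cnj (\<Sum>i<nu * N. \<gamma> $ i * (zz ?c (i div nu) * Uc ?c $ (i mod nu)))"
        by (simp add: cnj_sum \<gamma>_def)
      also have "\<dots> = 0" using base[OF c] by simp
      finally show ?thesis .
    qed
  qed
  have "\<gamma> = 0\<^sub>v (nu * N)" by (rule fullrank_leftker[OF K rk gc ann])
  hence "\<gamma> $ (k * nu + q) = 0" using idx[OF k q] by simp
  thus ?thesis using idx[OF k q] q unfolding \<gamma>_def by simp
qed

end


lemma tmat_index:
  fixes A :: "'a::comm_semiring_0 mat"
  assumes "A \<in> carrier_mat n m" "\<xi> \<in> carrier_vec n" "r < m"
  shows "(transpose_mat A *\<^sub>v \<xi>) $ r = (\<Sum>q<n. A $$ (q, r) * \<xi> $ q)"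
  using assms by (simp add: scalar_prod_def col_def lessThan_atLeast0 mult.commute)

lemma col_scalar:
  fixes A :: "'a::comm_semiring_0 mat"
  assumes "A \<in> carrier_mat n m" "\<xi> \<in> carrier_vec n" "r < m"
  shows "col A r \<bullet> \<xi> = (\<Sum>q<n. A $$ (q, r) * \<xi> $ q)"
  using assms by (simp add: scalar_prod_def col_def lessThan_atLeast0 mult.commute)

context lti begin

definition Ann where
  "Ann N \<xi> b \<longleftrightarrow> (\<forall>c<M * Q. (\<Sum>r<nx. complex_of_real (\<xi> $ r) * Xc c $ r) +
      (\<Sum>k<N. \<Sum>q<nu. complex_of_real (b k $ q) * (zz c k * Uc c $ q)) = 0)"

lemma Ann_shift:
  assumes xi: "\<xi> \<in> carrier_vec nx" and an: "Ann N \<xi> b"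
  shows "Ann (Suc N) (transpose_mat A *\<^sub>v \<xi>) (\<lambda>k. if k = 0 then transpose_mat B *\<^sub>v \<xi> else b (k - 1))"
  unfolding Ann_def
proof (intro allI impI)
  fix c assume c: "c < M * Q"
  let ?e = "exp (\<i> * of_real (w (c mod M)))"
  let ?S1 = "\<Sum>r<nx. complex_of_real (\<xi> $ r) * Xc c $ r"
  let ?S2 = "\<Sum>k<N. \<Sum>q<nu. complex_of_real (b k $ q) * (zz c k * Uc c $ q)"
  have S: "?S1 + ?S2 = 0" using an c unfolding Ann_def by blast
  have t1: "(\<Sum>r<nx. complex_of_real ((transpose_mat A *\<^sub>v \<xi>) $ r) * Xc c $ r)
      = (\<Sum>q<nx. complex_of_real (\<xi> $ q) * (\<Sum>r<nx. complex_of_real (A $$ (q, r)) * Xc c $ r))"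
  proof -
    have "(\<Sum>r<nx. complex_of_real ((transpose_mat A *\<^sub>v \<xi>) $ r) * Xc c $ r)
        = (\<Sum>r<nx. complex_of_real (\<Sum>q<nx. A $$ (q, r) * \<xi> $ q) * Xc c $ r)"
      using A xi by (intro sum.cong refl) (simp add: col_scalar)
    also have "\<dots> = (\<Sum>r<nx. \<Sum>q<nx. complex_of_real (\<xi> $ q) * (complex_of_real (A $$ (q, r)) * Xc c $ r))"
      by (simp add: sum_distrib_left sum_distrib_right mult_ac)
    also have "\<dots> = (\<Sum>q<nx. \<Sum>r<nx. complex_of_real (\<xi> $ q) * (complex_of_real (A $$ (q, r)) * Xc c $ r))"
      by (rule sum.swap)
    also have "\<dots> = (\<Sum>q<nx. complex_of_real (\<xi> $ q) * (\<Sum>r<nx. complex_of_real (A $$ (q, r)) * Xc c $ r))"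
      by (simp add: sum_distrib_left)
    finally show ?thesis .
  qed
  have t2: "(\<Sum>l<nu. complex_of_real ((transpose_mat B *\<^sub>v \<xi>) $ l) * (zz c 0 * Uc c $ l))
      = (\<Sum>q<nx. complex_of_real (\<xi> $ q) * (\<Sum>l<nu. complex_of_real (B $$ (q, l)) * Uc c $ l))"
  proof -
    have "(\<Sum>l<nu. complex_of_real ((transpose_mat B *\<^sub>v \<xi>) $ l) * (zz c 0 * Uc c $ l))
        = (\<Sum>l<nu. complex_of_real (\<Sum>q<nx. B $$ (q, l) * \<xi> $ q) * Uc c $ l)"
      using B xi by (intro sum.cong refl) (simp add: col_scalar zz_0)
    also have "\<dots> = (\<Sum>l<nu. \<Sum>q<nx. complex_of_real (\<xi> $ q) * (complex_of_real (B $$ (q, l)) * Uc c $ l))"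
      by (simp add: sum_distrib_left sum_distrib_right mult_ac)
    also have "\<dots> = (\<Sum>q<nx. \<Sum>l<nu. complex_of_real (\<xi> $ q) * (complex_of_real (B $$ (q, l)) * Uc c $ l))"
      by (rule sum.swap)
    also have "\<dots> = (\<Sum>q<nx. complex_of_real (\<xi> $ q) * (\<Sum>l<nu. complex_of_real (B $$ (q, l)) * Uc c $ l))"
      by (simp add: sum_distrib_left)
    finally show ?thesis .
  qed
  have t12: "(\<Sum>q<nx. complex_of_real (\<xi> $ q) * (\<Sum>r<nx. complex_of_real (A $$ (q, r)) * Xc c $ r))
     + (\<Sum>q<nx. complex_of_real (\<xi> $ q) * (\<Sum>l<nu. complex_of_real (B $$ (q, l)) * Uc c $ l)) = ?e * ?S1"
  proof -
    have "(\<Sum>q<nx. complex_of_real (\<xi> $ q) * (\<Sum>r<nx. complex_of_real (A $$ (q, r)) * Xc c $ r))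
     + (\<Sum>q<nx. complex_of_real (\<xi> $ q) * (\<Sum>l<nu. complex_of_real (B $$ (q, l)) * Uc c $ l))
     = (\<Sum>q<nx. complex_of_real (\<xi> $ q) * ((\<Sum>r<nx. complex_of_real (A $$ (q, r)) * Xc c $ r)
          + (\<Sum>l<nu. complex_of_real (B $$ (q, l)) * Uc c $ l)))"
      by (simp add: sum.distrib distrib_left)
    also have "\<dots> = (\<Sum>q<nx. complex_of_real (\<xi> $ q) * (?e * Xc c $ q))"
      by (intro sum.cong refl) (simp add: xrel[OF c])
    also have "\<dots> = ?e * ?S1" by (simp add: sum_distrib_left mult_ac)
    finally show ?thesis .
  qed
  have t3: "(\<Sum>k<N. \<Sum>q<nu. complex_of_real (b k $ q) * (zz c (Suc k) * Uc c $ q)) = ?e * ?S2"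
    by (simp add: zz_Suc sum_distrib_left mult_ac)
  have "(\<Sum>r<nx. complex_of_real ((transpose_mat A *\<^sub>v \<xi>) $ r) * Xc c $ r) +
      (\<Sum>k<Suc N. \<Sum>q<nu. complex_of_real ((if k = 0 then transpose_mat B *\<^sub>v \<xi> else b (k - 1)) $ q) * (zz c k * Uc c $ q))
    = (\<Sum>r<nx. complex_of_real ((transpose_mat A *\<^sub>v \<xi>) $ r) * Xc c $ r) +
      ((\<Sum>l<nu. complex_of_real ((transpose_mat B *\<^sub>v \<xi>) $ l) * (zz c 0 * Uc c $ l)) +
       (\<Sum>k<N. \<Sum>q<nu. complex_of_real (b k $ q) * (zz c (Suc k) * Uc c $ q)))"
    by (subst sum.lessThan_Suc_shift) simp
  also have "\<dots> = ?e * (?S1 + ?S2)"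
    unfolding t1 t2 t3 using t12 by (simp add: algebra_simps)
  also have "\<dots> = 0" using S by simp
  finally show "(\<Sum>r<nx. complex_of_real ((transpose_mat A *\<^sub>v \<xi>) $ r) * Xc c $ r) +
      (\<Sum>k<Suc N. \<Sum>q<nu. complex_of_real ((if k = 0 then transpose_mat B *\<^sub>v \<xi> else b (k - 1)) $ q) * (zz c k * Uc c $ q)) = 0" .
qed

end


context lti begin

abbreviation itA where "itA s \<xi> \<equiv> ((\<lambda>x. transpose_mat A *\<^sub>v x) ^^ s) \<xi>"

lemma At: "transpose_mat A \<in> carrier_mat nx nx" using A by simp
lemma Bt: "transpose_mat B \<in> carrier_mat nu nx" using B by simp

lemma itA_carr: "\<xi> \<in> carrier_vec nx \<Longrightarrow> itA s \<xi> \<in> carrier_vec nx"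
  using iter_carrier[OF At] by blast

lemma Ann_iter:
  assumes xi: "\<xi> \<in> carrier_vec nx" and an: "Ann L \<xi> \<eta>"
  shows "Ann (L + s) (itA s \<xi>) (\<lambda>k. if k < s then transpose_mat B *\<^sub>v itA (s - 1 - k) \<xi> else \<eta> (k - s))"
proof (induction s)
  case 0 then show ?case using an by simp
next
  case (Suc s)
  have c: "itA s \<xi> \<in> carrier_vec nx" by (rule itA_carr[OF xi])
  have e: "(\<lambda>k. if k = 0 then transpose_mat B *\<^sub>v itA s \<xi>
      else (if k - 1 < s then transpose_mat B *\<^sub>v itA (s - 1 - (k - 1)) \<xi> else \<eta> (k - 1 - s)))
    = (\<lambda>k. if k < Suc s then transpose_mat B *\<^sub>v itA (Suc s - 1 - k) \<xi> else \<eta> (k - Suc s))"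
  proof (rule ext)
    fix k show "(if k = 0 then transpose_mat B *\<^sub>v itA s \<xi>
      else (if k - 1 < s then transpose_mat B *\<^sub>v itA (s - 1 - (k - 1)) \<xi> else \<eta> (k - 1 - s)))
      = (if k < Suc s then transpose_mat B *\<^sub>v itA (Suc s - 1 - k) \<xi> else \<eta> (k - Suc s))"
      by (cases k) auto
  qed
  from Ann_shift[OF c Suc.IH] e show ?case by simp
qed

lemma Ann_ext:
  assumes an: "Ann N \<xi> b" and NN: "N \<le> N'" and z: "\<forall>k. N \<le> k \<longrightarrow> k < N' \<longrightarrow> b k = 0\<^sub>v nu"
  shows "Ann N' \<xi> b"
  unfolding Ann_def
proof (intro allI impI)
  fix c assume c: "c < M * Q"
  let ?f = "\<lambda>k. \<Sum>q<nu. complex_of_real (b k $ q) * (zz c k * Uc c $ q)"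
  have U: "{..<N'} = {..<N} \<union> {N..<N'}" using NN by auto
  have "sum ?f {..<N'} = sum ?f {..<N} + sum ?f {N..<N'}"
    unfolding U by (rule sum.union_disjoint) auto
  also have "sum ?f {N..<N'} = 0"
    by (rule sum.neutral) (use z in auto)
  finally have "sum ?f {..<N'} = sum ?f {..<N}" by simp
  thus "(\<Sum>r<nx. complex_of_real (\<xi> $ r) * Xc c $ r) + sum ?f {..<N'} = 0"
    using an c unfolding Ann_def by simp
qed

lemma Ann_comb:
  assumes fin: "finite S" and an: "\<forall>s\<in>S. Ann N (xs s) (bs s)"
  shows "Ann N (vec nx (\<lambda>r. \<Sum>s\<in>S. \<alpha> s * xs s $ r)) (\<lambda>k. vec nu (\<lambda>q. \<Sum>s\<in>S. \<alpha> s * bs s k $ q))"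
  unfolding Ann_def
proof (intro allI impI)
  fix c assume c: "c < M * Q"
  define E where "E s = (\<Sum>r<nx. complex_of_real (xs s $ r) * Xc c $ r) +
      (\<Sum>k<N. \<Sum>q<nu. complex_of_real (bs s k $ q) * (zz c k * Uc c $ q))" for s
  have E0: "\<forall>s\<in>S. E s = 0"
  proof
    fix s assume "s \<in> S"
    hence "Ann N (xs s) (bs s)" using an by blast
    from this[unfolded Ann_def, rule_format, OF c] show "E s = 0" unfolding E_def .
  qed
  have T1: "(\<Sum>r<nx. complex_of_real (vec nx (\<lambda>r. \<Sum>s\<in>S. \<alpha> s * xs s $ r) $ r) * Xc c $ r)
     = (\<Sum>s\<in>S. complex_of_real (\<alpha> s) * (\<Sum>r<nx. complex_of_real (xs s $ r) * Xc c $ r))"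
  proof -
    have "(\<Sum>r<nx. complex_of_real (vec nx (\<lambda>r. \<Sum>s\<in>S. \<alpha> s * xs s $ r) $ r) * Xc c $ r)
       = (\<Sum>r<nx. \<Sum>s\<in>S. complex_of_real (\<alpha> s) * (complex_of_real (xs s $ r) * Xc c $ r))"
      by (intro sum.cong refl) (simp add: sum_distrib_left sum_distrib_right mult_ac)
    also have "\<dots> = (\<Sum>s\<in>S. \<Sum>r<nx. complex_of_real (\<alpha> s) * (complex_of_real (xs s $ r) * Xc c $ r))"
      by (rule sum.swap)
    also have "\<dots> = (\<Sum>s\<in>S. complex_of_real (\<alpha> s) * (\<Sum>r<nx. complex_of_real (xs s $ r) * Xc c $ r))"
      by (simp add: sum_distrib_left)
    finally show ?thesis .
  qed
  have T2: "(\<Sum>k<N. \<Sum>q<nu. complex_of_real (vec nu (\<lambda>q. \<Sum>s\<in>S. \<alpha> s * bs s k $ q) $ q) * (zz c k * Uc c $ q))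
     = (\<Sum>s\<in>S. complex_of_real (\<alpha> s) * (\<Sum>k<N. \<Sum>q<nu. complex_of_real (bs s k $ q) * (zz c k * Uc c $ q)))"
  proof -
    have "(\<Sum>k<N. \<Sum>q<nu. complex_of_real (vec nu (\<lambda>q. \<Sum>s\<in>S. \<alpha> s * bs s k $ q) $ q) * (zz c k * Uc c $ q))
       = (\<Sum>k<N. \<Sum>q<nu. \<Sum>s\<in>S. complex_of_real (\<alpha> s) * (complex_of_real (bs s k $ q) * (zz c k * Uc c $ q)))"
    proof (intro sum.cong refl)
      fix k q assume "q \<in> {..<nu}"
      hence q: "q < nu" by simp
      show "complex_of_real (vec nu (\<lambda>q. \<Sum>s\<in>S. \<alpha> s * bs s k $ q) $ q) * (zz c k * Uc c $ q)
        = (\<Sum>s\<in>S. complex_of_real (\<alpha> s) * (complex_of_real (bs s k $ q) * (zz c k * Uc c $ q)))"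
        unfolding index_vec[OF q] of_real_sum sum_distrib_right by (simp add: mult.assoc)
    qed
    also have "\<dots> = (\<Sum>k<N. \<Sum>s\<in>S. \<Sum>q<nu. complex_of_real (\<alpha> s) * (complex_of_real (bs s k $ q) * (zz c k * Uc c $ q)))"
      by (intro sum.cong refl) (rule sum.swap)
    also have "\<dots> = (\<Sum>s\<in>S. \<Sum>k<N. \<Sum>q<nu. complex_of_real (\<alpha> s) * (complex_of_real (bs s k $ q) * (zz c k * Uc c $ q)))"
      by (rule sum.swap)
    also have "\<dots> = (\<Sum>s\<in>S. complex_of_real (\<alpha> s) * (\<Sum>k<N. \<Sum>q<nu. complex_of_real (bs s k $ q) * (zz c k * Uc c $ q)))"
      by (simp add: sum_distrib_left)
    finally show ?thesis .
  qed
  have "(\<Sum>s\<in>S. complex_of_real (\<alpha> s) * (\<Sum>r<nx. complex_of_real (xs s $ r) * Xc c $ r))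
     + (\<Sum>s\<in>S. complex_of_real (\<alpha> s) * (\<Sum>k<N. \<Sum>q<nu. complex_of_real (bs s k $ q) * (zz c k * Uc c $ q)))
     = (\<Sum>s\<in>S. complex_of_real (\<alpha> s) * E s)"
    unfolding E_def by (simp add: sum.distrib distrib_left)
  also have "\<dots> = 0" using E0 by simp
  finally show "(\<Sum>r<nx. complex_of_real (vec nx (\<lambda>r. \<Sum>s\<in>S. \<alpha> s * xs s $ r) $ r) * Xc c $ r) +
      (\<Sum>k<N. \<Sum>q<nu. complex_of_real (vec nu (\<lambda>q. \<Sum>s\<in>S. \<alpha> s * bs s k $ q) $ q) * (zz c k * Uc c $ q)) = 0"
    unfolding T1 T2 .
qed

lemma link:
  assumes xi: "\<xi> \<in> carrier_vec nx" and Mx: "Mx \<in> carrier_mat nx p" and l: "l < p"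
  shows "(\<Sum>q<nx. itA j \<xi> $ q * Mx $$ (q, l)) = (\<Sum>i<nx. \<xi> $ i * (A ^\<^sub>m j * Mx) $$ (i, l))"
  using Mx l
proof (induction j arbitrary: Mx)
  case 0
  then show ?case using A by simp
next
  case (Suc j)
  let ?v = "itA j \<xi>"
  have v: "?v \<in> carrier_vec nx" by (rule itA_carr[OF xi])
  have AM: "A * Mx \<in> carrier_mat nx p" by (rule mult_carrier_mat[OF A Suc.prems(1)])
  have Aj: "A ^\<^sub>m j \<in> carrier_mat nx nx"
    by (rule carrier_matI) (simp_all only: pow_mat_dim_square[OF A])
  have "(\<Sum>q<nx. itA (Suc j) \<xi> $ q * Mx $$ (q, l)) = (\<Sum>q<nx. (\<Sum>p<nx. A $$ (p, q) * ?v $ p) * Mx $$ (q, l))"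
    using A v by (intro sum.cong refl) (simp add: col_scalar)
  also have "\<dots> = (\<Sum>q<nx. \<Sum>p<nx. ?v $ p * (A $$ (p, q) * Mx $$ (q, l)))"
    by (simp add: sum_distrib_left sum_distrib_right mult_ac)
  also have "\<dots> = (\<Sum>p<nx. \<Sum>q<nx. ?v $ p * (A $$ (p, q) * Mx $$ (q, l)))"
    by (rule sum.swap)
  also have "\<dots> = (\<Sum>p<nx. ?v $ p * (\<Sum>q<nx. A $$ (p, q) * Mx $$ (q, l)))"
    by (simp add: sum_distrib_left)
  also have "\<dots> = (\<Sum>p<nx. ?v $ p * (A * Mx) $$ (p, l))"
  proof (intro sum.cong refl arg_cong[where f = "\<lambda>x. ?v $ _ * x"])
    fix p assume "p \<in> {..<nx}"
    hence p: "p < nx" by simp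
    have "(A * Mx) $$ (p, l) = row A p \<bullet> col Mx l" using A Suc.prems p by simp
    also have "\<dots> = (\<Sum>q<nx. A $$ (p, q) * Mx $$ (q, l))"
      using A Suc.prems p by (simp add: scalar_prod_def lessThan_atLeast0)
    finally show "(\<Sum>q<nx. A $$ (p, q) * Mx $$ (q, l)) = (A * Mx) $$ (p, l)" by simp
  qed
  also have "\<dots> = (\<Sum>i<nx. \<xi> $ i * (A ^\<^sub>m j * (A * Mx)) $$ (i, l))"
    by (rule Suc.IH[OF AM Suc.prems(2)])
  also have "A ^\<^sub>m j * (A * Mx) = A ^\<^sub>m Suc j * Mx"
    unfolding pow_mat.simps(2) by (rule assoc_mult_mat[OF Aj A Suc.prems(1), symmetric])
  finally show ?case .
qed

end


context lti begin

lemma willems: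
  assumes ctrb: "controllable A B" and cpe: "CPE nu (L + nx) M Q U w"
    and xi: "\<xi> \<in> carrier_vec nx" and eta: "\<forall>k. \<eta> k \<in> carrier_vec nu"
    and etaz: "\<forall>k. L \<le> k \<longrightarrow> \<eta> k = 0\<^sub>v nu"
    and an: "Ann L \<xi> \<eta>"
  shows "\<xi> = 0\<^sub>v nx \<and> (\<forall>k. \<eta> k = 0\<^sub>v nu)"
proof -
  define bs where "bs s k = (if k < s then transpose_mat B *\<^sub>v itA (s - 1 - k) \<xi> else \<eta> (k - s))" for s k
  obtain d a where d: "d \<le> nx" and dep: "\<forall>r<nx. itA d \<xi> $ r = (\<Sum>s<d. a s * itA s \<xi> $ r)"
    using lin_dep_seq[of nx "\<lambda>s. itA s \<xi>"] by blast
  have annS: "\<forall>s\<in>{..d}. Ann (L + nx) (itA s \<xi>) (bs s)"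
  proof
    fix s assume "s \<in> {..d}"
    hence s: "s \<le> d" by simp
    have e: "bs s = (\<lambda>k. if k < s then transpose_mat B *\<^sub>v itA (s - 1 - k) \<xi> else \<eta> (k - s))"
      by (rule ext) (simp add: bs_def)
    have "Ann (L + s) (itA s \<xi>) (bs s)" unfolding e by (rule Ann_iter[OF xi an])
    moreover have "\<forall>k. L + s \<le> k \<longrightarrow> k < L + nx \<longrightarrow> bs s k = 0\<^sub>v nu"
      using etaz by (auto simp: bs_def)
    ultimately show "Ann (L + nx) (itA s \<xi>) (bs s)"
      using Ann_ext[of "L + s" "itA s \<xi>" "bs s" "L + nx"] s d by simp
  qed
  define \<alpha> where "\<alpha> s = (if s = d then 1 else - a s)" for s
  have comb: "Ann (L + nx) (vec nx (\<lambda>r. \<Sum>s\<in>{..d}. \<alpha> s * itA s \<xi> $ r)) (\<lambda>k. vec nu (\<lambda>q. \<Sum>s\<in>{..d}. \<alpha> s * bs s k $ q))"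
    by (rule Ann_comb) (use annS in auto)
  have split: "(\<Sum>s\<in>{..d}. f s) = f d + (\<Sum>s<d. f s)" for f :: "nat \<Rightarrow> real"
    by (simp add: lessThan_Suc_atMost[symmetric])
  have x0: "(\<Sum>s\<in>{..d}. \<alpha> s * itA s \<xi> $ r) = 0" if r: "r < nx" for r
  proof -
    have "(\<Sum>s\<in>{..d}. \<alpha> s * itA s \<xi> $ r) = itA d \<xi> $ r + (\<Sum>s<d. - a s * itA s \<xi> $ r)"
      unfolding split by (simp add: \<alpha>_def)
    also have "\<dots> = 0" using dep r by (simp add: sum_negf)
    finally show ?thesis .
  qed
  define \<beta> where "\<beta> k = vec nu (\<lambda>q. \<Sum>s\<in>{..d}. \<alpha> s * bs s k $ q)" for k
  have bz: "\<forall>c<M * Q. (\<Sum>k<L + nx. \<Sum>q<nu. complex_of_real (\<beta> k $ q) * (zz c k * Uc c $ q)) = 0"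
  proof (intro allI impI)
    fix c assume c: "c < M * Q"
    have "(\<Sum>r<nx. complex_of_real (vec nx (\<lambda>r. \<Sum>s\<in>{..d}. \<alpha> s * itA s \<xi> $ r) $ r) * Xc c $ r) = 0"
      by (rule sum.neutral) (simp add: x0)
    thus "(\<Sum>k<L + nx. \<Sum>q<nu. complex_of_real (\<beta> k $ q) * (zz c k * Uc c $ q)) = 0"
      using comb[unfolded Ann_def, rule_format, OF c] unfolding \<beta>_def by simp
  qed
  have \<beta>0: "\<beta> k $ q = 0" if "k < L + nx" "q < nu" for k q
    by (rule cpe_zero[OF cpe bz that])
  have \<beta>e: "\<beta> k $ q = bs d k $ q + (\<Sum>s<d. \<alpha> s * bs s k $ q)" if q: "q < nu" for k q
    unfolding \<beta>_def index_vec[OF q] split by (simp add: \<alpha>_def)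
  have etaq: "\<eta> j $ q = 0" if q: "q < nu" for j q
  proof (induction "L - j" arbitrary: j rule: less_induct)
    case less
    show ?case
    proof (cases "L \<le> j")
      case True thus ?thesis using etaz q by simp
    next
      case False
      have k: "d + j < L + nx" using d False by simp
      have "\<forall>s<d. bs s (d + j) $ q = 0"
      proof (intro allI impI)
        fix s assume s: "s < d"
        have "bs s (d + j) = \<eta> (d + j - s)" using s by (simp add: bs_def)
        moreover have "L - (d + j - s) < L - j" using s False by simp
        ultimately show "bs s (d + j) $ q = 0" using less by simp
      qed
      hence "\<beta> (d + j) $ q = \<eta> j $ q" using \<beta>e[OF q, of "d + j"] by (simp add: bs_def)
      thus ?thesis using \<beta>0[OF k q] by simp
    qed
  qed
  have etaZ: "\<forall>k. \<eta> k = 0\<^sub>v nu"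
    using eta etaq by (intro allI eq_vecI) auto
  have low: "transpose_mat B *\<^sub>v itA j \<xi> = 0\<^sub>v nu" if "j < d" for j
    using that
  proof (induction j rule: less_induct)
    case (less j)
    define k where "k = d - 1 - j"
    have k: "k < L + nx" using less.prems d unfolding k_def by simp
    show ?case
    proof (rule eq_vecI)
      fix q assume "q < dim_vec (0\<^sub>v nu :: real vec)"
      hence q: "q < nu" by simp
      have "\<forall>s<d. bs s k $ q = 0"
      proof (intro allI impI)
        fix s assume s: "s < d"
        show "bs s k $ q = 0"
        proof (cases "k < s")
          case True
          have "s - 1 - k < j" using True s less.prems unfolding k_def by simp
          hence "transpose_mat B *\<^sub>v itA (s - 1 - k) \<xi> = 0\<^sub>v nu" using less.IH less.prems by simp
          thus ?thesis using True q by (simp add: bs_def)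
        next
          case False
          thus ?thesis using etaZ q by (simp add: bs_def)
        qed
      qed
      moreover have "bs d k = transpose_mat B *\<^sub>v itA j \<xi>"
        using less.prems unfolding bs_def k_def by (simp add: Suc_pred)
      ultimately have "\<beta> k $ q = (transpose_mat B *\<^sub>v itA j \<xi>) $ q" using \<beta>e[OF q, of k] by simp
      thus "(transpose_mat B *\<^sub>v itA j \<xi>) $ q = 0\<^sub>v nu $ q" using \<beta>0[OF k q] q by simp
    qed (use B in simp)
  qed
  have all: "transpose_mat B *\<^sub>v itA j \<xi> = 0\<^sub>v nu" for j
    by (rule propagate[OF At Bt xi dep]) (use low in blast)
  have K: "ctrb_mat A B \<in> carrier_mat nx (nx * nu)"
    using A B unfolding ctrb_mat_def by simp
  have rk: "vec_space.rank nx (ctrb_mat A B) = nx"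
    using ctrb A unfolding controllable_def by simp
  have "\<xi> = 0\<^sub>v nx"
  proof (rule fullrank_leftker[OF K rk xi], intro allI impI)
    fix jj assume jj: "jj < nx * nu"
    have nu0: "nu > 0" using jj by (cases nu) auto
    let ?j = "jj div nu" and ?l = "jj mod nu"
    have l: "?l < nu" using nu0 by simp
    have "(\<Sum>i<nx. \<xi> $ i * ctrb_mat A B $$ (i, jj)) = (\<Sum>i<nx. \<xi> $ i * (A ^\<^sub>m ?j * B) $$ (i, ?l))"
      using A B jj by (intro sum.cong refl) (simp add: ctrb_mat_def)
    also have "\<dots> = (\<Sum>q<nx. itA ?j \<xi> $ q * B $$ (q, ?l))"
      by (rule link[OF xi B l, symmetric])
    also have "\<dots> = (transpose_mat B *\<^sub>v itA ?j \<xi>) $ ?l"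
      using B l itA_carr[OF xi] by (simp add: col_scalar mult.commute)
    also have "\<dots> = 0" using all l by simp
    finally show "(\<Sum>i<nx. \<xi> $ i * ctrb_mat A B $$ (i, jj)) = 0" .
  qed
  with etaZ show ?thesis by simp
qed

end


lemma append_vec_assoc: "(a @\<^sub>v b) @\<^sub>v c = a @\<^sub>v (b @\<^sub>v c)"
proof (rule eq_vecI)
  fix i assume "i < dim_vec (a @\<^sub>v (b @\<^sub>v c))"
  hence i: "i < dim_vec a + dim_vec b + dim_vec c" by simp
  show "((a @\<^sub>v b) @\<^sub>v c) $ i = (a @\<^sub>v (b @\<^sub>v c)) $ i"
  proof (cases "i < dim_vec a")
    case True thus ?thesis using i by simp
  next
    case F1: False
    show ?thesis
    proof (cases "i < dim_vec a + dim_vec b")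
      case True
      hence "i - dim_vec a < dim_vec b" using F1 by linarith
      thus ?thesis using i F1 True by simp
    next
      case False
      hence "\<not> i - dim_vec a < dim_vec b" using F1 by linarith
      thus ?thesis using i F1 False by (simp add: diff_diff_left)
    qed
  qed
qed simp

lemma divmod_shift:
  assumes "n * L0 \<le> (r::nat)" "0 < n"
  shows "(r - n * L0) div n = r div n - L0" "(r - n * L0) mod n = r mod n"
proof -
  obtain t where r: "r = t + L0 * n" using assms(1) by (metis le_add_diff_inverse2 mult.commute)
  show "(r - n * L0) div n = r div n - L0" "(r - n * L0) mod n = r mod n"
    using assms(2) unfolding r by (simp_all add: mult.commute)
qed

lemma blk_idx:
  assumes "k < N" "q < (n::nat)"
  shows "k * n + q < n * N" "(k * n + q) div n = k" "(k * n + q) mod n = q"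
proof -
  have "k * n + q < k * n + n" using assms by simp
  also have "\<dots> = Suc k * n" by simp
  also have "\<dots> \<le> N * n" using assms by (intro mult_right_mono) auto
  finally show "k * n + q < n * N" by (simp add: mult.commute)
  show "(k * n + q) div n = k" "(k * n + q) mod n = q" using assms by simp_all
qed

context lti begin

lemma yh_eq_of_diff:
  assumes v: "v \<in> carrier_vec ny" and z: "v - yh h k = 0\<^sub>v ny"
  shows "yh h k = v"
proof (rule eq_vecI)
  fix i assume "i < dim_vec v"
  hence i: "i < ny" using v by simp
  have "(v - yh h k) $ i = 0" using z i by simp
  moreover have "(v - yh h k) $ i = v $ i - yh h k $ i" using i by simp
  ultimately show "yh h k $ i = v $ i" by simp
qed (use v in simp)

definition aG where
  "aG c r = (if r < nx then Xc c $ r else zz c ((r - nx) div nu) * Uc c $ ((r - nx) mod nu))"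

definition GG where "GG L = RI M Q (nx + nu * L) (\<lambda>r c. aG c r)"

lemma GG_leftker:
  assumes ctrb: "controllable A B" and cpe: "CPE nu (L + nx) M Q U w"
    and gam: "\<gamma> \<in> carrier_vec (nx + nu * L)" and z: "transpose_mat (GG L) *\<^sub>v \<gamma> = 0\<^sub>v (2 * M * Q)"
  shows "\<gamma> = 0\<^sub>v (nx + nu * L)"
proof -
  define \<xi> where "\<xi> = vec nx (\<lambda>r. \<gamma> $ r)"
  define \<eta> where "\<eta> k = (if k < L then vec nu (\<lambda>q. \<gamma> $ (nx + (k * nu + q))) else 0\<^sub>v nu)" for k
  have xi: "\<xi> \<in> carrier_vec nx" unfolding \<xi>_def by simp
  have eta: "\<forall>k. \<eta> k \<in> carrier_vec nu" unfolding \<eta>_def by simp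
  have etaz: "\<forall>k. L \<le> k \<longrightarrow> \<eta> k = 0\<^sub>v nu" unfolding \<eta>_def by simp
  have an: "Ann L \<xi> \<eta>" unfolding Ann_def
  proof (intro allI impI)
    fix c assume c: "c < M * Q"
    let ?f = "\<lambda>r. complex_of_real (\<gamma> $ r) * aG c r"
    have S: "(\<Sum>r<nx + nu * L. ?f r) = 0"
      using RI_leftker[OF gam z[unfolded GG_def] c] .
    have "(\<Sum>r<nx + nu * L. ?f r) = (\<Sum>r<nx. ?f r) + (\<Sum>r\<in>{nx..<nx + nu * L}. ?f r)"
      by (simp add: lessThan_atLeast0 sum.atLeastLessThan_concat)
    also have "(\<Sum>r\<in>{nx..<nx + nu * L}. ?f r) = (\<Sum>r<nu * L. ?f (nx + r))"
      using sum.shift_bounds_nat_ivl[of ?f 0 nx "nu * L"] by (simp add: lessThan_atLeast0 add.commute)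
    also have "\<dots> = (\<Sum>k<L. \<Sum>q<nu. ?f (nx + (k * nu + q)))" by (rule sum_blocks)
    also have "\<dots> = (\<Sum>k<L. \<Sum>q<nu. complex_of_real (\<eta> k $ q) * (zz c k * Uc c $ q))"
      by (intro sum.cong refl) (simp add: \<eta>_def aG_def blk_idx)
    also have "(\<Sum>r<nx. ?f r) = (\<Sum>r<nx. complex_of_real (\<xi> $ r) * Xc c $ r)"
      by (intro sum.cong refl) (simp add: \<xi>_def aG_def)
    finally show "(\<Sum>r<nx. complex_of_real (\<xi> $ r) * Xc c $ r) +
        (\<Sum>k<L. \<Sum>q<nu. complex_of_real (\<eta> k $ q) * (zz c k * Uc c $ q)) = 0" using S by simp
  qed
  from willems[OF ctrb cpe xi eta etaz an]
  have X0: "\<xi> = 0\<^sub>v nx" and E0: "\<forall>k. \<eta> k = 0\<^sub>v nu" by auto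
  show ?thesis
  proof (rule eq_vecI)
    fix r assume "r < dim_vec (0\<^sub>v (nx + nu * L))"
    hence r: "r < nx + nu * L" by simp
    show "\<gamma> $ r = 0\<^sub>v (nx + nu * L) $ r"
    proof (cases "r < nx")
      case True
      have "\<xi> $ r = \<gamma> $ r" using True unfolding \<xi>_def by simp
      thus ?thesis using X0 True r by simp
    next
      case False
      define r' where "r' = r - nx"
      have r': "r' < nu * L" using r False unfolding r'_def by simp
      hence nu0: "nu > 0" by (cases nu) auto
      have k: "r' div nu < L" using r' by (simp add: less_mult_imp_div_less mult.commute)
      have q: "r' mod nu < nu" using nu0 by simp
      have "\<eta> (r' div nu) $ (r' mod nu) = \<gamma> $ (nx + (r' div nu * nu + r' mod nu))"
        unfolding \<eta>_def using k q by simp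
      also have "nx + (r' div nu * nu + r' mod nu) = r" using False unfolding r'_def by simp
      finally show ?thesis using E0 q r by simp
    qed
  qed (use gam in simp)
qed

lemma GG_solve:
  assumes ctrb: "controllable A B" and cpe: "CPE nu (L + nx) M Q U w"
    and x0: "x0 \<in> carrier_vec nx" and uu: "\<forall>k. uu k \<in> carrier_vec nu"
  shows "\<exists>g\<in>carrier_vec (2 * M * Q). xh (hOf M Q g) 0 = x0 \<and> (\<forall>k<L. uh (hOf M Q g) k = uu k)"
proof -
  define b where "b = vec (nx + nu * L) (\<lambda>r. if r < nx then x0 $ r else uu ((r - nx) div nu) $ ((r - nx) mod nu))"
  have G: "GG L \<in> carrier_mat (nx + nu * L) (2 * M * Q)" unfolding GG_def by simp
  obtain g where g: "g \<in> carrier_vec (2 * M * Q)" and Gg: "GG L *\<^sub>v g = b"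
    using real_solve[OF G _, of b] GG_leftker[OF ctrb cpe] unfolding b_def by auto
  have ent: "Re (\<Sum>c<M * Q. hOf M Q g c * aG c r) = b $ r" if r: "r < nx + nu * L" for r
    using RI_mult[OF g r, of "\<lambda>r c. aG c r"] Gg r unfolding GG_def by simp
  show ?thesis
  proof (intro bexI conjI allI impI)
    show "g \<in> carrier_vec (2 * M * Q)" by fact
    show "xh (hOf M Q g) 0 = x0"
    proof (rule eq_vecI)
      fix r assume "r < dim_vec x0"
      hence r: "r < nx" using x0 by simp
      have "xh (hOf M Q g) 0 $ r = Re (\<Sum>c<M * Q. hOf M Q g c * aG c r)"
        using r by (simp add: xh_def aG_def zz_0)
      also have "\<dots> = x0 $ r" using ent[of r] r by (simp add: b_def)
      finally show "xh (hOf M Q g) 0 $ r = x0 $ r" .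
    qed (use x0 in simp)
    fix k assume k: "k < L"
    show "uh (hOf M Q g) k = uu k"
    proof (rule eq_vecI)
      fix q assume "q < dim_vec (uu k)"
      moreover have "uu k \<in> carrier_vec nu" using uu by blast
      ultimately have q: "q < nu" by simp
      have idx: "nx + (k * nu + q) < nx + nu * L" using blk_idx[OF k q] by simp
      have "uh (hOf M Q g) k $ q = Re (\<Sum>c<M * Q. hOf M Q g c * aG c (nx + (k * nu + q)))"
        using q by (simp add: uh_def aG_def blk_idx[OF k q] mult.assoc)
      also have "\<dots> = uu k $ q" using ent[OF idx] q by (simp add: b_def blk_idx[OF k q])
      finally show "uh (hOf M Q g) k $ q = uu k $ q" .
    next
      have "uu k \<in> carrier_vec nu" using uu by blast
      thus "dim_vec (uh (hOf M Q g) k) = dim_vec (uu k)" by simp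
    qed
  qed
qed

end


theorem proposition1:
  fixes A B C D :: "real mat" and nx nu ny Q M L0 L :: nat
    and w :: "nat \<Rightarrow> real"
    and Ud Yd :: "nat \<Rightarrow> real \<Rightarrow> complex vec"
    and uini yini u y :: "nat \<Rightarrow> real vec"
  assumes A: "A \<in> carrier_mat nx nx" and B: "B \<in> carrier_mat nx nu"
    and C: "C \<in> carrier_mat ny nx" and D: "D \<in> carrier_mat ny nu"
    and ctrb: "controllable A B"
    and Q: "Q \<ge> 1" and M: "M \<ge> 1"
    and freq: "\<forall>m<M. w m \<in> {0..<pi}"
    and spec: "\<forall>i<Q. io_spectrum A B C D (Ud i) (Yd i)"
    and L: "nx \<le> L0" "L0 \<le> L"
    and cpe: "CPE nu (L + nx) M Q (\<lambda>i m. Ud i (w m)) w"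
    and ini: "io_trajectory A B C D L0 uini yini"
    and traj: "io_trajectory A B C D L u y"
    and agree: "\<forall>k<L0. u k = uini k \<and> y k = yini k"
  shows "(\<exists>g \<in> carrier_vec (2 * M * Q).
            stack nu uini 0 L0 @\<^sub>v stack nu u L0 L @\<^sub>v stack ny yini 0 L0 =
            (Gamma_mat nu L M Q (\<lambda>i m. Ud i (w m)) w @\<^sub>r Gamma_mat ny L0 M Q (\<lambda>i m. Yd i (w m)) w) *\<^sub>v g)
       \<and> (\<forall>g \<in> carrier_vec (2 * M * Q).
            stack nu uini 0 L0 @\<^sub>v stack nu u L0 L @\<^sub>v stack ny yini 0 L0 =
            (Gamma_mat nu L M Q (\<lambda>i m. Ud i (w m)) w @\<^sub>r Gamma_mat ny L0 M Q (\<lambda>i m. Yd i (w m)) w) *\<^sub>v g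
            \<longrightarrow> stack ny y 0 L = Gamma_mat ny L M Q (\<lambda>i m. Yd i (w m)) w *\<^sub>v g)"
proof -
  have dA: "dim_row A = nx" using A by simp
  have dB: "dim_col B = nu" using B by simp
  have dC: "dim_row C = ny" using C by simp
  have wW: "\<forall>m<M. w m \<in> Wint" using freq pi_gt_zero unfolding Wint_def by fastforce
  define Xs where "Xs i = (SOME X. is_spectrum (dim_row A) X \<and>
        (\<forall>ww\<in>Wint. exp (\<i> * of_real ww) \<cdot>\<^sub>v X ww = cmat A *\<^sub>v X ww + cmat B *\<^sub>v Ud i ww \<and>
                   Yd i ww = cmat C *\<^sub>v X ww + cmat D *\<^sub>v Ud i ww))" for i
  have Xs: "is_spectrum nx (Xs i) \<and>
        (\<forall>ww\<in>Wint. exp (\<i> * of_real ww) \<cdot>\<^sub>v Xs i ww = cmat A *\<^sub>v Xs i ww + cmat B *\<^sub>v Ud i ww \<and>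
                   Yd i ww = cmat C *\<^sub>v Xs i ww + cmat D *\<^sub>v Ud i ww)"
    and UYs: "is_spectrum nu (Ud i) \<and> is_spectrum ny (Yd i)" if i: "i < Q" for i
  proof -
    have sp: "io_spectrum A B C D (Ud i) (Yd i)" using spec i by blast
    thus "is_spectrum nu (Ud i) \<and> is_spectrum ny (Yd i)" unfolding io_spectrum_def dB dC by blast
    from sp have "\<exists>X. is_spectrum (dim_row A) X \<and>
        (\<forall>ww\<in>Wint. exp (\<i> * of_real ww) \<cdot>\<^sub>v X ww = cmat A *\<^sub>v X ww + cmat B *\<^sub>v Ud i ww \<and>
                   Yd i ww = cmat C *\<^sub>v X ww + cmat D *\<^sub>v Ud i ww)"
      unfolding io_spectrum_def by blast
    from someI_ex[OF this] show "is_spectrum nx (Xs i) \<and>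
        (\<forall>ww\<in>Wint. exp (\<i> * of_real ww) \<cdot>\<^sub>v Xs i ww = cmat A *\<^sub>v Xs i ww + cmat B *\<^sub>v Ud i ww \<and>
                   Yd i ww = cmat C *\<^sub>v Xs i ww + cmat D *\<^sub>v Ud i ww)"
      unfolding Xs_def dA .
  qed
  interpret L: lti A B C D nx nu ny M Q w "\<lambda>i m. Ud i (w m)" "\<lambda>i m. Xs i (w m)" "\<lambda>i m. Yd i (w m)"
  proof (unfold_locales)
    show "\<forall>i<Q. \<forall>m<M. Ud i (w m) \<in> carrier_vec nu \<and> Xs i (w m) \<in> carrier_vec nx \<and> Yd i (w m) \<in> carrier_vec ny \<and>
        exp (\<i> * of_real (w m)) \<cdot>\<^sub>v Xs i (w m) = cmat A *\<^sub>v Xs i (w m) + cmat B *\<^sub>v Ud i (w m) \<and>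
        Yd i (w m) = cmat C *\<^sub>v Xs i (w m) + cmat D *\<^sub>v Ud i (w m)"
    proof (intro allI impI)
      fix i m assume i: "i < Q" and m: "m < M"
      have wm: "w m \<in> Wint" using wW m by blast
      show "Ud i (w m) \<in> carrier_vec nu \<and> Xs i (w m) \<in> carrier_vec nx \<and> Yd i (w m) \<in> carrier_vec ny \<and>
        exp (\<i> * of_real (w m)) \<cdot>\<^sub>v Xs i (w m) = cmat A *\<^sub>v Xs i (w m) + cmat B *\<^sub>v Ud i (w m) \<and>
        Yd i (w m) = cmat C *\<^sub>v Xs i (w m) + cmat D *\<^sub>v Ud i (w m)"
        using Xs[OF i] UYs[OF i] wm unfolding is_spectrum_def by blast
    qed
  qed (use A B C D M in auto)
  let ?GU = "Gamma_mat nu L M Q (\<lambda>i m. Ud i (w m)) w"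
  let ?GY0 = "Gamma_mat ny L0 M Q (\<lambda>i m. Yd i (w m)) w"
  let ?GYL = "Gamma_mat ny L M Q (\<lambda>i m. Yd i (w m)) w"
  define V1 where "V1 = stack nu uini 0 L0 @\<^sub>v stack nu u L0 L"
  define V2 where "V2 = stack ny yini 0 L0"
  have GU: "?GU \<in> carrier_mat (nu * L) (2 * M * Q)" unfolding Gamma_mat_def by (rule mat_carrier)
  have GY0: "?GY0 \<in> carrier_mat (ny * L0) (2 * M * Q)" unfolding Gamma_mat_def by (rule mat_carrier)
  have GYL: "?GYL \<in> carrier_mat (ny * L) (2 * M * Q)" unfolding Gamma_mat_def by (rule mat_carrier)
  have V1c: "V1 \<in> carrier_vec (nu * L)"
  proof -
    have e: "nu * (L0 - 0) + nu * (L - L0) = nu * L" using L by (metis add_mult_distrib2 le_add_diff_inverse minus_nat.diff_0)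
    have "V1 \<in> carrier_vec (nu * (L0 - 0) + nu * (L - L0))"
      unfolding V1_def stack_def by (intro append_carrier_vec vec_carrier)
    thus ?thesis unfolding e .
  qed
  have V2c: "V2 \<in> carrier_vec (ny * L0)" unfolding V2_def stack_def by simp
  have V1e: "V1 $ r = u (r div nu) $ (r mod nu)" if r: "r < nu * L" for r
  proof -
    have nu0: "nu > 0" using r by (cases nu) auto
    show ?thesis
    proof (cases "r < nu * L0")
      case True
      have k: "r div nu < L0" using True by (simp add: less_mult_imp_div_less mult.commute)
      have "V1 $ r = uini (r div nu) $ (r mod nu)"
        using True r unfolding V1_def stack_def by simp
      thus ?thesis using agree k by simp
    next
      case False
      have ge: "nu * L0 \<le> r" using False by simp
      have k: "L0 \<le> r div nu" using ge nu0 by (metis div_le_mono div_mult_self1_is_m mult.commute)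
      have d: "dim_vec (stack nu uini 0 L0) = nu * L0" unfolding stack_def by simp
      have "dim_vec (stack nu uini 0 L0) + dim_vec (stack nu u L0 L) = dim_vec V1"
        unfolding V1_def by simp
      also have "\<dots> = nu * L" using V1c by simp
      finally have rd: "r < dim_vec (stack nu uini 0 L0) + dim_vec (stack nu u L0 L)"
        using r by simp
      have "V1 $ r = stack nu u L0 L $ (r - nu * L0)"
        unfolding V1_def index_append_vec(1)[OF rd] d using False by simp
      also have "\<dots> = u (L0 + (r - nu * L0) div nu) $ ((r - nu * L0) mod nu)"
      proof -
        have "r - nu * L0 < nu * (L - L0)" using r ge by (simp add: diff_mult_distrib2)
        thus ?thesis unfolding stack_def by simp
      qed
      also have "\<dots> = u (r div nu) $ (r mod nu)"
        using divmod_shift[OF ge nu0] k by simp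
      finally show ?thesis .
    qed
  qed
  have V2e: "V2 $ r = yini (r div ny) $ (r mod ny)" if r: "r < ny * L0" for r
    using r unfolding V2_def stack_def by simp
  have lhs: "stack nu uini 0 L0 @\<^sub>v stack nu u L0 L @\<^sub>v stack ny yini 0 L0 = V1 @\<^sub>v V2"
    unfolding V1_def V2_def by (simp add: append_vec_assoc)
  have rhs: "(?GU @\<^sub>r ?GY0) *\<^sub>v g = (?GU *\<^sub>v g) @\<^sub>v (?GY0 *\<^sub>v g)" if g: "g \<in> carrier_vec (2 * M * Q)" for g
    by (rule mat_mult_append[OF GU GY0 g])
  obtain x where xc: "\<forall>k<L. x k \<in> carrier_vec nx"
    and xs: "\<forall>k. Suc k < L \<longrightarrow> x (Suc k) = A *\<^sub>v x k + B *\<^sub>v u k"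
    and ys: "\<forall>k<L. y k = C *\<^sub>v x k + D *\<^sub>v u k"
    and uc: "\<forall>k<L. u k \<in> carrier_vec nu" and yc: "\<forall>k<L. y k \<in> carrier_vec ny"
    using traj unfolding io_trajectory_def dA dB dC by blast
  have yinic: "\<forall>k<L0. yini k \<in> carrier_vec ny" using ini unfolding io_trajectory_def dC by blast
  show ?thesis
  proof (intro conjI ballI impI)
    define x0 where "x0 = (if 0 < L then x 0 else 0\<^sub>v nx)"
    define uu where "uu k = (if k < L then u k else 0\<^sub>v nu)" for k
    have x0c: "x0 \<in> carrier_vec nx" using xc unfolding x0_def by auto
    have uuc: "\<forall>k. uu k \<in> carrier_vec nu" using uc unfolding uu_def by auto
    obtain g where g: "g \<in> carrier_vec (2 * M * Q)" and gx: "L.xh (hOf M Q g) 0 = x0"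
      and gu: "\<forall>k<L. L.uh (hOf M Q g) k = uu k"
      using L.GG_solve[OF ctrb cpe x0c uuc] by blast
    let ?h = "hOf M Q g"
    have guk: "L.uh ?h k = u k" if "k < L" for k using gu that unfolding uu_def by simp
    have gxk: "L.xh ?h k = x k" if "k < L" for k
      using that
    proof (induction k)
      case 0 thus ?case using gx unfolding x0_def by simp
    next
      case (Suc k)
      have "L.xh ?h (Suc k) = A *\<^sub>v L.xh ?h k + B *\<^sub>v L.uh ?h k" by (rule L.xh_Suc)
      also have "\<dots> = A *\<^sub>v x k + B *\<^sub>v u k" using Suc guk by simp
      also have "\<dots> = x (Suc k)" using xs Suc by simp
      finally show ?case .
    qed
    have gyk: "L.yh ?h k = y k" if k: "k < L" for k
      using L.yh_eq[of ?h k] gxk[OF k] guk[OF k] ys k by simp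
    show "\<exists>g\<in>carrier_vec (2 * M * Q).
       stack nu uini 0 L0 @\<^sub>v stack nu u L0 L @\<^sub>v stack ny yini 0 L0 = (?GU @\<^sub>r ?GY0) *\<^sub>v g"
    proof (intro bexI)
      show "g \<in> carrier_vec (2 * M * Q)" by fact
      have e1: "?GU *\<^sub>v g = V1"
      proof (rule eq_vecI)
        fix r assume "r < dim_vec V1"
        hence r: "r < nu * L" using V1c by simp
        hence nu0: "nu > 0" by (cases nu) auto
        have k: "r div nu < L" using r by (simp add: less_mult_imp_div_less mult.commute)
        show "(?GU *\<^sub>v g) $ r = V1 $ r"
          using L.Gamma_U[OF g r] guk[OF k] V1e[OF r] by simp
      qed (use GU V1c in simp)
      have e2: "?GY0 *\<^sub>v g = V2"
      proof (rule eq_vecI)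
        fix r assume "r < dim_vec V2"
        hence r: "r < ny * L0" using V2c by simp
        have k: "r div ny < L0" using r by (simp add: less_mult_imp_div_less mult.commute)
        have kL: "r div ny < L" using k L by simp
        show "(?GY0 *\<^sub>v g) $ r = V2 $ r"
          using L.Gamma_Y[OF g r] gyk[OF kL] agree k V2e[OF r] by simp
      qed (use GY0 V2c in simp)
      show "stack nu uini 0 L0 @\<^sub>v stack nu u L0 L @\<^sub>v stack ny yini 0 L0 = (?GU @\<^sub>r ?GY0) *\<^sub>v g"
        unfolding lhs rhs[OF g] e1 e2 ..
    qed
  next
    fix g assume g: "g \<in> carrier_vec (2 * M * Q)"
      and eq: "stack nu uini 0 L0 @\<^sub>v stack nu u L0 L @\<^sub>v stack ny yini 0 L0 = (?GU @\<^sub>r ?GY0) *\<^sub>v g"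
    let ?h = "hOf M Q g"
    have "V1 @\<^sub>v V2 = (?GU *\<^sub>v g) @\<^sub>v (?GY0 *\<^sub>v g)" using eq unfolding lhs rhs[OF g] .
    moreover have "?GU *\<^sub>v g \<in> carrier_vec (nu * L)" using GU g by simp
    ultimately have E1: "V1 = ?GU *\<^sub>v g" and E2: "V2 = ?GY0 *\<^sub>v g"
      using append_vec_eq[OF V1c] by blast+
    have guk: "L.uh ?h k = u k" if k: "k < L" for k
    proof (rule eq_vecI)
      fix q assume "q < dim_vec (u k)"
      moreover have "u k \<in> carrier_vec nu" using uc k by blast
      ultimately have q: "q < nu" by simp
      note bi = blk_idx[OF k q]
      have "L.uh ?h k $ q = (?GU *\<^sub>v g) $ (k * nu + q)" using L.Gamma_U[OF g bi(1)] bi by simp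
      also have "\<dots> = u k $ q" using E1 V1e[OF bi(1)] bi by simp
      finally show "L.uh ?h k $ q = u k $ q" .
    next
      have "u k \<in> carrier_vec nu" using uc k by blast
      thus "dim_vec (L.uh ?h k) = dim_vec (u k)" by simp
    qed
    have gyk0: "L.yh ?h k = yini k" if k: "k < L0" for k
    proof (rule eq_vecI)
      fix q assume "q < dim_vec (yini k)"
      moreover have "yini k \<in> carrier_vec ny" using yinic k by blast
      ultimately have q: "q < ny" by simp
      note bi = blk_idx[OF k q]
      have "L.yh ?h k $ q = (?GY0 *\<^sub>v g) $ (k * ny + q)" using L.Gamma_Y[OF g bi(1)] bi by simp
      also have "\<dots> = yini k $ q" using E2 V2e[OF bi(1)] bi by simp
      finally show "L.yh ?h k $ q = yini k $ q" .
    next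
      have "yini k \<in> carrier_vec ny" using yinic k by blast
      thus "dim_vec (L.yh ?h k) = dim_vec (yini k)" by simp
    qed
    show "stack ny y 0 L = ?GYL *\<^sub>v g"
    proof (cases "L = 0")
      case True
      show ?thesis using GYL g True by (intro eq_vecI) (simp_all add: stack_def)
    next
      case False
      hence L0': "0 < L" by simp
      define e where "e k = x k - L.xh ?h k" for k
      have ec: "e k \<in> carrier_vec nx" if "k < L" for k using xc that unfolding e_def by simp
      let ?it = "\<lambda>k. ((\<lambda>v. A *\<^sub>v v) ^^ k) (e 0)"
      have eit: "e k = ?it k" if "k < L" for k
        using that
      proof (induction k)
        case 0 show ?case by simp
      next
        case (Suc k)
        have k: "k < L" using Suc by simp
        have xk: "x k \<in> carrier_vec nx" using xc k by simp
        have uk: "u k \<in> carrier_vec nu" using uc k by simp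
        have "e (Suc k) = (A *\<^sub>v x k + B *\<^sub>v u k) - (A *\<^sub>v L.xh ?h k + B *\<^sub>v u k)"
          unfolding e_def using xs Suc L.xh_Suc[of ?h k] guk[OF k] by simp
        also have "\<dots> = A *\<^sub>v e k"
        proof -
          have "A *\<^sub>v e k = A *\<^sub>v x k - A *\<^sub>v L.xh ?h k"
            unfolding e_def by (rule mult_minus_distrib_mat_vec[OF A xk L.xh_carr])
          thus ?thesis using A B xk uk by (intro eq_vecI) auto
        qed
        also have "\<dots> = ?it (Suc k)" using Suc k by simp
        finally show ?case .
      qed
      have Ce: "C *\<^sub>v e k = y k - L.yh ?h k" if k: "k < L" for k
      proof -
        have xk: "x k \<in> carrier_vec nx" using xc k by simp
        have uk: "u k \<in> carrier_vec nu" using uc k by simp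
        have "C *\<^sub>v e k = C *\<^sub>v x k - C *\<^sub>v L.xh ?h k"
          unfolding e_def by (rule mult_minus_distrib_mat_vec[OF C xk L.xh_carr])
        moreover have "y k = C *\<^sub>v x k + D *\<^sub>v u k" using ys k by simp
        moreover have "L.yh ?h k = C *\<^sub>v L.xh ?h k + D *\<^sub>v u k" using L.yh_eq[of ?h k] guk[OF k] by simp
        ultimately show ?thesis using C D xk uk by (intro eq_vecI) auto
      qed
      have e0c: "e 0 \<in> carrier_vec nx" using ec L0' by simp
      obtain d a where d: "d \<le> nx" and dep: "\<forall>r<nx. ?it d $ r = (\<Sum>s<d. a s * ?it s $ r)"
        using lin_dep_seq[of nx ?it] by blast
      have low: "\<forall>s<d. C *\<^sub>v ?it s = 0\<^sub>v ny"
      proof (intro allI impI)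
        fix s assume s: "s < d"
        have sL0: "s < L0" using s d L by simp
        hence sL: "s < L" using L by simp
        have "C *\<^sub>v ?it s = y s - L.yh ?h s" using Ce[OF sL] eit[OF sL] by simp
        also have "\<dots> = yini s - yini s" using agree sL0 gyk0[OF sL0] by simp
        also have "\<dots> = 0\<^sub>v ny" using yinic sL0 by simp
        finally show "C *\<^sub>v ?it s = 0\<^sub>v ny" .
      qed
      have allC: "C *\<^sub>v ?it j = 0\<^sub>v ny" for j
        by (rule propagate[OF A C e0c dep low])
      have gyk: "L.yh ?h k = y k" if k: "k < L" for k
      proof -
        have z: "y k - L.yh ?h k = 0\<^sub>v ny" using Ce[OF k] eit[OF k] allC by simp
        have yk: "y k \<in> carrier_vec ny" using yc k by blast
        show ?thesis by (rule L.yh_eq_of_diff[OF yk z])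
      qed
      show ?thesis
      proof (rule eq_vecI)
        fix r assume "r < dim_vec (?GYL *\<^sub>v g)"
        hence r: "r < ny * L" using GYL by simp
        have k: "r div ny < L" using r by (simp add: less_mult_imp_div_less mult.commute)
        show "stack ny y 0 L $ r = (?GYL *\<^sub>v g) $ r"
          using L.Gamma_Y[OF g r] gyk[OF k] r unfolding stack_def by simp
      qed (use GYL in \<open>simp add: stack_def\<close>)
    qed
  qed
qed


end
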